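(* Let $\Sigma$ be an $\mathcal{F}$-transversal curve in a foliated symplectic surface $(S,\Omega_S,\mathcal{F})$ and $r_\alpha$ one of its ramification points. Then there exists an $(\mathcal{F},\Omega_S)$-chart $(U_\alpha,x_\alpha,y_\alpha)$ containing $r_\alpha$ such that, in terms of the standard local coordinate $z_\alpha=\sqrt{x_\alpha-x_\alpha(r_\alpha)}$ on $\Sigma\cap U_\alpha$, $\Sigma\cap U_\alpha$ is parametrized as $(x_\alpha,y_\alpha)=(z_\alpha^2,z_\alpha)$. Such a chart (as a germ of coordinates at $r_\alpha$) is unique up to the $\mathbb{Z}_3$-action $(x,y)\mapsto(\xi^2x,\xi y)$ with $\xi^3=1$.
   Context: A foliated symplectic surface $(S,\Omega_S,\mathcal{F})$: complex surface with closed non-degenerate holomorphic 2-form $\Omega_S$ and holomorphic foliation $\mathcal{F}$ by curves. An $(\mathcal{F},\Omega_S)$-chart is $(U,x,y)$ with $\Omega_S|_U=dx\wedge dy$ and leaves $\{x=\text{const}\}$. A smooth compact curve $\Sigma\subset S$ is $\mathcal{F}$-transversal if it is tangent to leaves of $\mathcal{F}$ at finitely many points (the ramification points), with tangency order $1$ at each; in an $(\mathcal{F},\Omega_S)$-chart around a ramification point $r_\alpha$, $z_\alpha=\sqrt{x_\alpha-x_\alpha(r_\alpha)}$ is a local coordinate on $\Sigma$ near $r_\alpha$ and $\Sigma$ is parametrized as $x_\alpha=x_\alpha(r_\alpha)+z_\alpha^2$, $y_\alpha=\sum_{k\ge0}b_kz_\alpha^k$ with $b_1\ne0$. *)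

theory Defs
  imports "HOL-Analysis.Analysis"
begin

text \<open>Local model: a neighbourhood of the ramification point in S is identified,
via a given (F,Omega)-chart, with an open set U0 of C x C carrying Omega = dx/\dy
and the foliation by vertical lines {x = const}.\<close>

definition holo2 :: "(complex \<times> complex \<Rightarrow> complex) \<Rightarrow> (complex \<times> complex) set \<Rightarrow> bool" where
  "holo2 f V \<longleftrightarrow> open V \<and>
     (\<forall>p\<in>V. \<exists>D. (f has_derivative D) (at p) \<and>
        (\<forall>(a::complex) v. D (a * fst v, a * snd v) = a * D v))"

definition pd1 :: "(complex \<times> complex \<Rightarrow> complex) \<Rightarrow> complex \<times> complex \<Rightarrow> complex" where
  "pd1 f p = frechet_derivative f (at p) (1, 0)"

definition pd2 :: "(complex \<times> complex \<Rightarrow> complex) \<Rightarrow> complex \<times> complex \<Rightarrow> complex" where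
  "pd2 f p = frechet_derivative f (at p) (0, 1)"

text \<open>(F,Omega)-chart (V, X, Y) with (X,Y) = phi: holomorphic coordinates,
leaves {x = const} are sent into {X = const} (dX/dy = 0), and dX/\dY = dx/\dy
(Jacobian determinant 1).\<close>
definition FO_chart :: "(complex \<times> complex) set \<Rightarrow> (complex \<times> complex \<Rightarrow> complex \<times> complex) \<Rightarrow> bool" where
  "FO_chart V \<phi> \<longleftrightarrow> open V \<and> holo2 (fst \<circ> \<phi>) V \<and> holo2 (snd \<circ> \<phi>) V \<and>
     inj_on \<phi> V \<and> open (\<phi> ` V) \<and>
     (\<forall>p\<in>V. pd2 (fst \<circ> \<phi>) p = 0 \<and>
        pd1 (fst \<circ> \<phi>) p * pd2 (snd \<circ> \<phi>) p - pd2 (fst \<circ> \<phi>) p * pd1 (snd \<circ> \<phi>) p = 1)"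

text \<open>Normal-form chart at r: an (F,Omega)-chart inside U0 containing r, with
phi r = (0,0) and Sigma \<inter> V = {X = Y^2}, i.e. Sigma is parametrized as (z^2, z)
with z = Y = sqrt(X - X(r)).\<close>
definition normal_chart ::
  "(complex \<times> complex) set \<Rightarrow> (complex \<times> complex) set \<Rightarrow> complex \<times> complex \<Rightarrow>
   (complex \<times> complex) set \<Rightarrow> (complex \<times> complex \<Rightarrow> complex \<times> complex) \<Rightarrow> bool" where
  "normal_chart U0 \<Sigma> r V \<phi> \<longleftrightarrow> V \<subseteq> U0 \<and> r \<in> V \<and> FO_chart V \<phi> \<and> \<phi> r = (0, 0) \<and>
     (\<forall>p\<in>V. p \<in> \<Sigma> \<longleftrightarrow> fst (\<phi> p) = (snd (\<phi> p))^2)"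

end

theory Submission
  imports Defs "HOL-Complex_Analysis.Complex_Analysis"
begin

lemma holo2_chain:
  assumes "holo2 f V" "(a t, b t) \<in> V" "(a has_field_derivative a') (at t)"
    "(b has_field_derivative b') (at t)"
  shows "((\<lambda>z. f (a z, b z)) has_field_derivative frechet_derivative f (at (a t, b t)) (a', b')) (at t)"
proof -
  obtain D where hD: "(f has_derivative D) (at (a t, b t))"
    and lin: "\<forall>(c::complex) v. D (c * fst v, c * snd v) = c * D v"
    using assms(1,2) unfolding holo2_def by blast
  have DD: "D = frechet_derivative f (at (a t, b t))" using frechet_derivative_at[OF hD] .
  have hp: "((\<lambda>z. (a z, b z)) has_derivative (\<lambda>h. (a' * h, b' * h))) (at t)"
    using has_derivative_Pair[OF assms(3)[THEN has_field_derivative_imp_has_derivative]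
        assms(4)[THEN has_field_derivative_imp_has_derivative]] by (simp add: mult.commute)
  have "((f \<circ> (\<lambda>z. (a z, b z))) has_derivative (D \<circ> (\<lambda>h. (a' * h, b' * h)))) (at t)"
    using diff_chain_at[OF hp hD] by simp
  moreover have "(D \<circ> (\<lambda>h. (a' * h, b' * h))) = (*) (D (a', b'))"
  proof
    fix h show "(D \<circ> (\<lambda>h. (a' * h, b' * h))) h = D (a', b') * h"
      using lin[rule_format, of h "(a',b')"] by (simp add: mult.commute)
  qed
  ultimately show ?thesis unfolding has_field_derivative_def DD by (simp add: o_def)
qed

lemma prod_ball_sub:
  fixes r :: "complex \<times> complex"
  assumes "\<rho>0 > 0"
  shows "ball (fst r) (\<rho>0/2) \<times> ball (snd r) (\<rho>0/2) \<subseteq> ball r \<rho>0"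
proof
  fix p assume "p \<in> ball (fst r) (\<rho>0/2) \<times> ball (snd r) (\<rho>0/2)"
  then obtain x y where p: "p = (x,y)" "dist (fst r) x < \<rho>0/2" "dist (snd r) y < \<rho>0/2"
    by (cases p) (auto simp: mem_Times_iff)
  have "dist r p = norm (fst r - x, snd r - y)"
    by (cases r) (simp add: p dist_norm)
  also have "\<dots> \<le> norm (fst r - x) + norm (snd r - y)" by (rule norm_Pair_le)
  also have "\<dots> < \<rho>0" using p by (simp add: dist_norm)
  finally show "p \<in> ball r \<rho>0" by simp
qed

lemma FO_struct:
  assumes "FO_chart V \<phi>" "r \<in> V"
  obtains \<rho> F F' G where "\<rho> > 0" "ball (fst r) \<rho> \<times> ball (snd r) \<rho> \<subseteq> V"
    "\<And>x. x \<in> ball (fst r) \<rho> \<Longrightarrow> (F has_field_derivative F' x) (at x)"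
    "\<And>x. x \<in> ball (fst r) \<rho> \<Longrightarrow> F' x \<noteq> 0"
    "\<And>x y. x \<in> ball (fst r) \<rho> \<Longrightarrow> y \<in> ball (snd r) \<rho> \<Longrightarrow> \<phi> (x,y) = (F x, y / F' x + G x)"
proof -
  define X where "X = fst \<circ> \<phi>"
  define Y where "Y = snd \<circ> \<phi>"
  have oV: "open V" and hX: "holo2 X V" and hY: "holo2 Y V"
    and pdc: "\<And>p. p \<in> V \<Longrightarrow> pd2 X p = 0 \<and> pd1 X p * pd2 Y p - pd2 X p * pd1 Y p = 1"
    using assms(1) unfolding FO_chart_def X_def Y_def by auto
  obtain \<rho>0 where \<rho>0: "\<rho>0 > 0" "ball r \<rho>0 \<subseteq> V" using oV assms(2) openE by blast
  define \<rho> where "\<rho> = \<rho>0/2"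
  define Bx where "Bx = ball (fst r) \<rho>"
  define By where "By = ball (snd r) \<rho>"
  have \<rho>pos: "\<rho> > 0" using \<rho>0 by (simp add: \<rho>_def)
  have PV: "Bx \<times> By \<subseteq> V" using prod_ball_sub[OF \<rho>0(1), of r] \<rho>0(2) by (auto simp: Bx_def By_def \<rho>_def)
  have D2: "((\<lambda>z. f (x, z)) has_field_derivative pd2 f (x,y)) (at y)"
    if "holo2 f V" "x \<in> Bx" "y \<in> By" for f x y
    using holo2_chain[OF that(1), of "\<lambda>z. x" y "\<lambda>z. z" 0 1] PV that
    by (auto simp: pd2_def)
  have D1: "((\<lambda>z. f (z, y)) has_field_derivative pd1 f (x,y)) (at x)"
    if "holo2 f V" "x \<in> Bx" "y \<in> By" for f x y
    using holo2_chain[OF that(1), of "\<lambda>z. z" x "\<lambda>z. y" 1 0] PV that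
    by (auto simp: pd1_def)
  define F where "F x = X (x, snd r)" for x
  define F' where "F' x = pd1 X (x, snd r)" for x
  have sr: "snd r \<in> By" using \<rho>pos by (simp add: By_def)
  have constX: "X (x,y) = F x" if "x \<in> Bx" "y \<in> By" for x y
  proof -
    have "\<exists>c. \<forall>z\<in>By. X (x,z) = c"
    proof (rule has_field_derivative_zero_constant)
      show "convex By" by (simp add: By_def)
      fix z assume "z \<in> By"
      then have "(x,z) \<in> V" using PV that(1) by auto
      then show "((\<lambda>z. X (x, z)) has_field_derivative 0) (at z within By)"
        using D2[OF hX that(1) \<open>z \<in> By\<close>] pdc[of "(x,z)"]
        by (auto intro: has_field_derivative_at_within)
    qed
    then show ?thesis using that sr by (auto simp: F_def)
  qed
  have DF: "(F has_field_derivative F' x) (at x)" if "x \<in> Bx" for x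
    using D1[OF hX that sr] unfolding F_def[abs_def] F'_def by simp
  have pd1X: "pd1 X (x,y) = F' x" if "x \<in> Bx" "y \<in> By" for x y
  proof -
    have "(F has_field_derivative pd1 X (x,y)) (at x)"
      by (rule has_field_derivative_transform_within_open[OF D1[OF hX that], of Bx])
         (use that constX in \<open>auto simp: Bx_def\<close>)
    then show ?thesis using DF[OF that(1)] DERIV_unique by blast
  qed
  have det: "F' x * pd2 Y (x,y) = 1" if "x \<in> Bx" "y \<in> By" for x y
  proof -
    have "(x,y) \<in> V" using PV that by auto
    then show ?thesis using pdc[of "(x,y)"] pd1X[OF that] by auto
  qed
  have F'nz: "F' x \<noteq> 0" if "x \<in> Bx" for x using det[OF that sr] by auto
  define G where "G x = Y (x, snd r) - snd r / F' x" for x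
  have constY: "Y (x,y) = y / F' x + G x" if "x \<in> Bx" "y \<in> By" for x y
  proof -
    have "\<exists>c. \<forall>z\<in>By. Y (x,z) - z / F' x = c"
    proof (rule has_field_derivative_zero_constant)
      show "convex By" by (simp add: By_def)
      fix z assume z: "z \<in> By"
      have "((\<lambda>z. Y (x, z) - z / F' x) has_field_derivative (pd2 Y (x,z) - 1 / F' x)) (at z)"
        using D2[OF hY that(1) z] F'nz[OF that(1)] by (auto intro!: derivative_eq_intros)
      moreover have "pd2 Y (x,z) - 1 / F' x = 0"
        using det[OF that(1) z] F'nz[OF that(1)] by (auto simp: field_simps)
      ultimately show "((\<lambda>z. Y (x, z) - z / F' x) has_field_derivative 0) (at z within By)"
        by (auto intro: has_field_derivative_at_within)
    qed
    then obtain c where "\<forall>z\<in>By. Y (x,z) - z / F' x = c" by blast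
    then have "Y (x,y) - y / F' x = Y (x, snd r) - snd r / F' x" using that sr by auto
    then show ?thesis by (simp add: G_def algebra_simps)
  qed
  show ?thesis
  proof (rule that[of \<rho> F F' G])
    show "0 < \<rho>" by (rule \<rho>pos)
    show "ball (fst r) \<rho> \<times> ball (snd r) \<rho> \<subseteq> V" using PV by (simp add: Bx_def By_def)
    show "\<And>x. x \<in> ball (fst r) \<rho> \<Longrightarrow> (F has_field_derivative F' x) (at x)" using DF by (simp add: Bx_def)
    show "\<And>x. x \<in> ball (fst r) \<rho> \<Longrightarrow> F' x \<noteq> 0" using F'nz by (simp add: Bx_def)
    fix x y assume "x \<in> ball (fst r) \<rho>" "y \<in> ball (snd r) \<rho>"
    then show "\<phi> (x,y) = (F x, y / F' x + G x)"
      using constX[of x y] constY[of x y] by (auto simp: Bx_def By_def X_def Y_def prod_eq_iff)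
  qed
qed

lemma deriv_limit_zero:
  assumes "(f has_field_derivative D) (at (0::complex))" "f 0 = 0" "D \<noteq> 0"
  shows "eventually (\<lambda>z. f z \<noteq> 0) (at 0)"
proof -
  have "((\<lambda>z. f z / z) \<longlongrightarrow> D) (at 0)"
    using assms(1,2) unfolding has_field_derivative_iff by simp
  then have "eventually (\<lambda>z. f z / z \<noteq> 0) (at 0)"
    using tendsto_imp_eventually_ne assms(3) by blast
  then show ?thesis by (rule eventually_mono) auto
qed

lemma eventually_at0_ball:
  assumes "eventually P (at (0::complex))"
  obtains d where "d > 0" "\<And>z. z \<in> ball 0 d \<Longrightarrow> z \<noteq> 0 \<Longrightarrow> P z"
  using assms unfolding eventually_at by (auto simp: dist_norm)

lemma one_chart:
  fixes U0 \<Sigma> :: "(complex \<times> complex) set" and r :: "complex \<times> complex"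
    and \<beta> :: "complex \<Rightarrow> complex" and \<epsilon> :: real
  assumes "\<epsilon> > 0"
    and h\<beta>: "\<beta> holomorphic_on ball 0 \<epsilon>" and b0: "\<beta> 0 = snd r" and db: "deriv \<beta> 0 \<noteq> 0"
    and sub: "(\<lambda>z. (fst r + z^2, \<beta> z)) ` ball 0 \<epsilon> \<subseteq> U0"
    and Sig: "\<Sigma> \<inter> U0 = (\<lambda>z. (fst r + z^2, \<beta> z)) ` ball 0 \<epsilon>"
    and nc: "normal_chart U0 \<Sigma> r V \<phi>"
    and Ycd: "\<And>z. Yc z = snd (\<phi> (fst r + z^2, \<beta> z))"
  obtains \<rho> F F' G \<delta> where "\<rho> > 0" "ball (fst r) \<rho> \<times> ball (snd r) \<rho> \<subseteq> V"
    "\<And>x. x \<in> ball (fst r) \<rho> \<Longrightarrow> (F has_field_derivative F' x) (at x)"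
    "\<And>x. x \<in> ball (fst r) \<rho> \<Longrightarrow> F' x \<noteq> 0"
    "\<And>x y. x \<in> ball (fst r) \<rho> \<Longrightarrow> y \<in> ball (snd r) \<rho> \<Longrightarrow> \<phi> (x,y) = (F x, y / F' x + G x)"
    "\<delta> > 0" "\<delta>^2 \<le> \<rho>"
    "Yc holomorphic_on ball 0 \<delta>"
    "Yc 0 = 0"
    "deriv Yc 0 \<noteq> 0"
    "\<And>z. z \<in> ball 0 \<delta> \<Longrightarrow> (Yc z)^2 * deriv Yc z
         = z * ((\<beta> z - \<beta> (-z)) / 2)"
    "\<And>z. z \<in> ball 0 \<delta> \<Longrightarrow> F (fst r + z^2) = (Yc z)^2"
    "\<And>z. z \<in> ball 0 \<delta> \<Longrightarrow> F' (fst r + z^2) * Yc z = (\<beta> z - \<beta> (-z)) / 2"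
    "\<And>z. z \<in> ball 0 \<delta> \<Longrightarrow> G (fst r + z^2) = - ((\<beta> z + \<beta> (-z)) / 2) / F' (fst r + z^2)"
proof -
  define x0 where "x0 = fst r"
  define y0 where "y0 = snd r"
  have r: "r = (x0, y0)" by (simp add: x0_def y0_def)
  have VU: "V \<subseteq> U0" and rV: "r \<in> V" and FO: "FO_chart V \<phi>" and \<phi>r: "\<phi> r = (0,0)"
    and SV: "\<And>p. p \<in> V \<Longrightarrow> p \<in> \<Sigma> \<longleftrightarrow> fst (\<phi> p) = (snd (\<phi> p))^2"
    using nc unfolding normal_chart_def by auto
  have hY: "holo2 (snd \<circ> \<phi>) V" using FO unfolding FO_chart_def by auto
  obtain \<rho> F F' G where \<rho>: "\<rho> > 0" "ball x0 \<rho> \<times> ball y0 \<rho> \<subseteq> V"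
    and DF: "\<And>x. x \<in> ball x0 \<rho> \<Longrightarrow> (F has_field_derivative F' x) (at x)"
    and F'nz: "\<And>x. x \<in> ball x0 \<rho> \<Longrightarrow> F' x \<noteq> 0"
    and \<phi>eq: "\<And>x y. x \<in> ball x0 \<rho> \<Longrightarrow> y \<in> ball y0 \<rho> \<Longrightarrow> \<phi> (x,y) = (F x, y / F' x + G x)"
    using FO_struct[OF FO rV] unfolding x0_def y0_def by metis
  have cb: "isCont \<beta> 0"
    using h\<beta> \<open>\<epsilon> > 0\<close> by (meson centre_in_ball continuous_on_eq_continuous_at holomorphic_on_imp_continuous_on open_ball)
  then have "eventually (\<lambda>z. dist (\<beta> z) (\<beta> 0) < \<rho>) (at 0)"
    using \<rho>(1) unfolding isCont_def tendsto_iff by blast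
  then obtain d where d: "d > 0" "\<And>z. z \<in> ball 0 d \<Longrightarrow> z \<noteq> 0 \<Longrightarrow> dist (\<beta> z) (\<beta> 0) < \<rho>"
    by (elim eventually_at0_ball) blast
  define \<delta>0 where "\<delta>0 = min (min \<epsilon> d) (sqrt \<rho>)"
  have \<delta>0pos: "\<delta>0 > 0" using d \<rho> \<open>\<epsilon>>0\<close> by (simp add: \<delta>0_def)
  have \<delta>0sq: "\<delta>0^2 \<le> \<rho>"
  proof -
    have "\<delta>0 \<le> sqrt \<rho>" by (simp add: \<delta>0_def)
    then have "\<delta>0^2 \<le> (sqrt \<rho>)^2" using \<delta>0pos by (intro power_mono) auto
    then show ?thesis using \<rho> by simp
  qed
  have inx: "x0 + z^2 \<in> ball x0 \<rho>" if "z \<in> ball 0 \<delta>0" for z :: complex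
  proof -
    have "norm z < \<delta>0" using that by simp
    then have "norm z ^ 2 < \<delta>0 ^2" by (intro power_strict_mono) auto
    then show ?thesis using \<delta>0sq by (simp add: dist_norm norm_power)
  qed
  have iny: "\<beta> z \<in> ball y0 \<rho>" if "z \<in> ball 0 \<delta>0" for z :: complex
    using d(2)[of z] that \<rho>(1) b0 by (cases "z = 0") (auto simp: \<delta>0_def y0_def dist_commute)
  have ine: "z \<in> ball 0 \<epsilon>" if "z \<in> ball 0 \<delta>0" for z using that by (simp add: \<delta>0_def)
  define Y where "Y z = snd (\<phi> (x0 + z^2, \<beta> z))" for z
  define \<Phi> where "\<Phi> z = F' (x0 + z^2)" for z
  have pV: "(x0 + z^2, \<beta> z) \<in> V" if "z \<in> ball 0 \<delta>0" for z :: complex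
    using \<rho>(2) inx[OF that] iny[OF that] by auto
  have onS: "F (x0 + z^2) = (Y z)^2" if "z \<in> ball 0 \<delta>0" for z :: complex
  proof -
    have "(x0 + z^2, \<beta> z) \<in> \<Sigma>" using Sig ine[OF that] by (auto simp: x0_def)
    then have "fst (\<phi> (x0 + z^2, \<beta> z)) = (snd (\<phi> (x0 + z^2, \<beta> z)))^2" using SV pV[OF that] by blast
    then show ?thesis using \<phi>eq[OF inx[OF that] iny[OF that]] by (simp add: Y_def)
  qed
  have Yeq: "Y z = \<beta> z / \<Phi> z + G (x0 + z^2)" if "z \<in> ball 0 \<delta>0" for z :: complex
    using \<phi>eq[OF inx[OF that] iny[OF that]] by (simp add: Y_def \<Phi>_def)
  have \<Phi>nz: "\<Phi> z \<noteq> 0" if "z \<in> ball 0 \<delta>0" for z using F'nz[OF inx[OF that]] by (simp add: \<Phi>_def)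
  have Y0: "Y 0 = 0"
  proof -
    have "(x0 + 0^2, \<beta> 0) = r" using b0 by (simp add: x0_def)
    then show ?thesis using \<phi>r by (simp add: Y_def)
  qed
  have DY: "(Y has_field_derivative frechet_derivative (snd \<circ> \<phi>) (at (x0 + z^2, \<beta> z)) (2*z, deriv \<beta> z)) (at z)"
    if "z \<in> ball 0 \<delta>0" for z :: complex
  proof -
    have "(\<beta> has_field_derivative deriv \<beta> z) (at z)"
      using holomorphic_derivI[OF h\<beta> open_ball ine[OF that]] .
    moreover have "((\<lambda>z. x0 + z^2) has_field_derivative 2*z) (at z)"
      by (auto intro!: derivative_eq_intros)
    ultimately show ?thesis
      using holo2_chain[OF hY, of "\<lambda>z. x0 + z^2" z \<beta>] pV[OF that] unfolding Y_def by (simp add: o_def)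
  qed
  have holY: "Y holomorphic_on ball 0 \<delta>0"
    unfolding holomorphic_on_open[OF open_ball] using DY by blast
  have dY: "(Y has_field_derivative deriv Y z) (at z)" if "z \<in> ball 0 \<delta>0" for z :: complex
    using holomorphic_derivI[OF holY open_ball that] .
  have holF: "F holomorphic_on ball x0 \<rho>"
    unfolding holomorphic_on_open[OF open_ball] using DF by blast
  have F'd: "F' x = deriv F x" if "x \<in> ball x0 \<rho>" for x using DF[OF that] DERIV_imp_deriv by metis
  have F'cont: "isCont F' x0"
  proof -
    have "continuous_on (ball x0 \<rho>) (deriv F)"
      using holomorphic_deriv[OF holF open_ball] holomorphic_on_imp_continuous_on by blast
    then have "isCont (deriv F) x0" using \<rho>(1) by (simp add: continuous_on_eq_continuous_at)
    moreover have "eventually (\<lambda>x. deriv F x = F' x) (nhds x0)"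
      using F'd \<rho>(1) by (intro eventually_nhds_in_open[of "ball x0 \<rho>", THEN eventually_mono]) auto
    ultimately show ?thesis using isCont_cong by blast
  qed
  have YY': "Y z * deriv Y z = z * \<Phi> z" if "z \<in> ball 0 \<delta>0" for z :: complex
  proof -
    have "((\<lambda>z. F (x0 + z^2)) has_field_derivative F' (x0 + z^2) * (2*z)) (at z)"
      using DF[OF inx[OF that]] by (auto intro!: derivative_eq_intros DERIV_chain2[of F])
    moreover have "((\<lambda>z. F (x0 + z^2)) has_field_derivative 2 * Y z * deriv Y z) (at z)"
    proof -
      have "((\<lambda>z. (Y z)^2) has_field_derivative 2 * Y z * deriv Y z) (at z)"
        using dY[OF that] by (auto intro!: derivative_eq_intros)
      then show ?thesis
        by (rule has_field_derivative_transform_within_open[of _ _ _ "ball 0 \<delta>0"]) (use that onS in auto)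
    qed
    ultimately have "F' (x0 + z^2) * (2*z) = 2 * Y z * deriv Y z" using DERIV_unique by blast
    then show ?thesis by (simp add: \<Phi>_def mult.commute)
  qed
  have dY0: "(deriv Y 0)^2 = \<Phi> 0"
  proof -
    have h0: "0 \<in> ball (0::complex) \<delta>0" using \<delta>0pos by simp
    have "deriv Y holomorphic_on ball 0 \<delta>0" by (rule holomorphic_deriv[OF holY open_ball])
    then have "(deriv Y has_field_derivative deriv (deriv Y) 0) (at 0)"
      using holomorphic_derivI[OF _ open_ball h0] by blast
    then have "((\<lambda>z. Y z * deriv Y z) has_field_derivative deriv Y 0 * deriv Y 0 + Y 0 * deriv (deriv Y) 0) (at 0)"
      using dY[OF h0] by (auto intro!: derivative_eq_intros)
    then have "((\<lambda>z. (Y z * deriv Y z - Y 0 * deriv Y 0) / (z - 0)) \<longlongrightarrow> (deriv Y 0)^2) (at 0)"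
      unfolding has_field_derivative_iff using Y0 by (simp add: power2_eq_square)
    then have L1: "((\<lambda>z. (Y z * deriv Y z) / z) \<longlongrightarrow> (deriv Y 0)^2) (at 0)" using Y0 by simp
    have "eventually (\<lambda>z. z \<in> ball 0 \<delta>0) (at (0::complex))"
      using h0 by (intro eventually_at_in_open') auto
    then have "eventually (\<lambda>z. (Y z * deriv Y z) / z = \<Phi> z) (at 0)"
      using eventually_at[of "\<lambda>z. True"] 
      by (smt (verit, ccfv_threshold) YY' eventually_at_filter eventually_mono nonzero_mult_div_cancel_left)
    then have L2: "(\<Phi> \<longlongrightarrow> (deriv Y 0)^2) (at 0)" using L1 Lim_transform_eventually by fastforce
    have c1: "isCont (\<lambda>z. x0 + z^2) (0::complex)" by (intro continuous_intros)
    have "isCont \<Phi> 0" unfolding \<Phi>_def using isCont_o2[OF c1, of F'] F'cont by simp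
    then have "(\<Phi> \<longlongrightarrow> \<Phi> 0) (at 0)" by (simp add: isCont_def)
    with L2 show ?thesis using tendsto_unique by (metis trivial_limit_at)
  qed
  have dY0nz: "deriv Y 0 \<noteq> 0" using dY0 \<Phi>nz[of 0] \<delta>0pos by auto
  have "eventually (\<lambda>z. Y z - Y (-z) \<noteq> 0) (at 0)"
  proof (rule deriv_limit_zero)
    have h0: "0 \<in> ball (0::complex) \<delta>0" using \<delta>0pos by simp
    have "((\<lambda>z. Y (-z)) has_field_derivative deriv Y 0 * (-1)) (at 0)"
    proof -
      have a: "(Y has_field_derivative deriv Y 0) (at (- 0))" using dY[OF h0] by simp
      have b: "((\<lambda>z. -z) has_field_derivative -1) (at (0::complex))" by (auto intro!: derivative_eq_intros)
      show ?thesis using DERIV_chain2[OF a b] by simp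
    qed
    then show "((\<lambda>z. Y z - Y (-z)) has_field_derivative deriv Y 0 - deriv Y 0 * (-1)) (at 0)"
      using dY[OF h0] by (auto intro!: derivative_eq_intros)
    show "Y 0 - Y (-0) = 0" by simp
    show "deriv Y 0 - deriv Y 0 * (-1) \<noteq> 0" using dY0nz by simp
  qed
  then obtain d1 where d1: "d1 > 0" "\<And>z. z \<in> ball 0 d1 \<Longrightarrow> z \<noteq> 0 \<Longrightarrow> Y z - Y (-z) \<noteq> 0"
    by (elim eventually_at0_ball) blast
  define \<delta> where "\<delta> = min \<delta>0 d1"
  have \<delta>pos: "\<delta> > 0" using \<delta>0pos d1 by (simp add: \<delta>_def)
  have in0: "z \<in> ball 0 \<delta>0" if "z \<in> ball 0 \<delta>" for z :: complex using that by (simp add: \<delta>_def)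
  have neg: "-z \<in> ball 0 \<delta>" if "z \<in> ball 0 \<delta>" for z :: complex using that by (simp add: dist_0_norm)
  have odd: "Y (-z) = - Y z" if "z \<in> ball 0 \<delta>" for z :: complex
  proof (cases "z = 0")
    case True then show ?thesis using Y0 by simp
  next
    case False
    have "(Y z)^2 = (Y (-z))^2" using onS[OF in0[OF that]] onS[OF in0[OF neg[OF that]]] by simp
    then have "Y z = Y (-z) \<or> Y z = - Y (-z)" by (simp add: power2_eq_iff)
    moreover have "Y z - Y (-z) \<noteq> 0" using d1(2)[OF _ False] that by (simp add: \<delta>_def)
    ultimately show ?thesis by auto
  qed
  have \<Phi>neg: "\<Phi> (-z) = \<Phi> z" for z by (simp add: \<Phi>_def)
  have YO: "\<Phi> z * Y z = (\<beta> z - \<beta> (-z)) / 2" if "z \<in> ball 0 \<delta>" for z :: complex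
  proof -
    have "Y z - Y (-z) = (\<beta> z - \<beta> (-z)) / \<Phi> z"
      using Yeq[OF in0[OF that]] Yeq[OF in0[OF neg[OF that]]] \<Phi>neg[of z]
      by (simp add: diff_divide_distrib)
    then have "2 * Y z = (\<beta> z - \<beta> (-z)) / \<Phi> z" using odd[OF that] by simp
    then show ?thesis using \<Phi>nz[OF in0[OF that]] by (simp add: field_simps)
  qed
  have GO: "G (x0 + z^2) = - ((\<beta> z + \<beta> (-z)) / 2) / \<Phi> z" if "z \<in> ball 0 \<delta>" for z :: complex
  proof -
    have "G (x0 + z^2) = Y z - \<beta> z / \<Phi> z" using Yeq[OF in0[OF that]] by simp
    also have "\<dots> = ((\<beta> z - \<beta> (-z)) / 2 - \<beta> z) / \<Phi> z"
    proof -
      have "Y z = ((\<beta> z - \<beta> (-z)) / 2) / \<Phi> z"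
        using YO[OF that] \<Phi>nz[OF in0[OF that]] by (simp add: eq_divide_eq algebra_simps)
      then show ?thesis by (simp add: diff_divide_distrib)
    qed
    also have "\<dots> = - ((\<beta> z + \<beta> (-z)) / 2) / \<Phi> z" by (rule arg_cong[where f="\<lambda>t. t / \<Phi> z"]) (simp add: field_simps)
    finally show ?thesis .
  qed
  have Y2Y': "(Y z)^2 * deriv Y z = z * ((\<beta> z - \<beta> (-z)) / 2)" if "z \<in> ball 0 \<delta>" for z :: complex
  proof -
    have "(Y z)^2 * deriv Y z = Y z * (Y z * deriv Y z)" by (simp add: power2_eq_square)
    also have "\<dots> = z * (\<Phi> z * Y z)" using YY'[OF in0[OF that]] by simp
    finally show ?thesis using YO[OF that] by simp
  qed
  have \<delta>sq: "\<delta>^2 \<le> \<rho>"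
  proof -
    have "\<delta>^2 \<le> \<delta>0^2" using \<delta>pos by (intro power_mono) (auto simp: \<delta>_def)
    then show ?thesis using \<delta>0sq by simp
  qed
  have holY': "Y holomorphic_on ball 0 \<delta>"
    using holY by (rule holomorphic_on_subset) (auto simp: \<delta>_def)
  have onSd: "F (x0 + z^2) = (Y z)^2" if "z \<in> ball 0 \<delta>" for z using onS in0 that by blast
  have YcY: "Yc = Y" by (rule ext) (simp add: Ycd Y_def x0_def)
  show ?thesis
    apply (rule that[of \<rho> F F' G \<delta>])
    apply (simp_all only: x0_def[symmetric] y0_def[symmetric] YcY)
    using \<rho> DF F'nz \<phi>eq \<delta>pos \<delta>sq holY' Y0 dY0nz Y2Y' onSd YO GO
    by (auto simp: \<Phi>_def)
qed

lemma cube_inv: "(\<xi>::complex)^3 = 1 \<Longrightarrow> 1 / \<xi>^2 = \<xi>"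
proof -
  assume h: "\<xi>^3 = 1"
  then have "\<xi> \<noteq> 0" by auto
  moreover have "\<xi>^2 * \<xi> = 1" using h by (simp add: power2_eq_square power3_eq_cube)
  ultimately show ?thesis by (simp add: field_simps)
qed

lemma sqrt_lt_sq: "0 < (d::real) \<Longrightarrow> 0 \<le> a \<Longrightarrow> a < d^2 \<Longrightarrow> sqrt a < d"
  by (metis abs_of_pos real_sqrt_abs real_sqrt_less_mono)

lemma uniq:
  fixes U0 \<Sigma> :: "(complex \<times> complex) set" and r :: "complex \<times> complex"
    and \<beta> :: "complex \<Rightarrow> complex" and \<epsilon> :: real
  assumes "\<epsilon> > 0"
    and h\<beta>: "\<beta> holomorphic_on ball 0 \<epsilon>" and b0: "\<beta> 0 = snd r" and db: "deriv \<beta> 0 \<noteq> 0"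
    and sub: "(\<lambda>z. (fst r + z^2, \<beta> z)) ` ball 0 \<epsilon> \<subseteq> U0"
    and Sig: "\<Sigma> \<inter> U0 = (\<lambda>z. (fst r + z^2, \<beta> z)) ` ball 0 \<epsilon>"
    and nc1: "normal_chart U0 \<Sigma> r V \<phi>" and nc2: "normal_chart U0 \<Sigma> r V' \<psi>"
  shows "\<exists>\<xi>::complex. \<xi>^3 = 1 \<and>
          (\<exists>W. open W \<and> r \<in> W \<and> W \<subseteq> V \<inter> V' \<and>
             (\<forall>p\<in>W. \<psi> p = (\<xi>^2 * fst (\<phi> p), \<xi> * snd (\<phi> p))))"
proof -
  define Y1 where "Y1 z = snd (\<phi> (fst r + z^2, \<beta> z))" for z
  define Y2 where "Y2 z = snd (\<psi> (fst r + z^2, \<beta> z))" for z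
  obtain \<rho>1 F1 F1' G1 \<delta>1 where c1: "\<rho>1 > 0" "ball (fst r) \<rho>1 \<times> ball (snd r) \<rho>1 \<subseteq> V"
    "\<And>x. x \<in> ball (fst r) \<rho>1 \<Longrightarrow> (F1 has_field_derivative F1' x) (at x)"
    "\<And>x. x \<in> ball (fst r) \<rho>1 \<Longrightarrow> F1' x \<noteq> 0"
    "\<And>x y. x \<in> ball (fst r) \<rho>1 \<Longrightarrow> y \<in> ball (snd r) \<rho>1 \<Longrightarrow> \<phi> (x,y) = (F1 x, y / F1' x + G1 x)"
    "\<delta>1 > 0" "\<delta>1^2 \<le> \<rho>1"
    "Y1 holomorphic_on ball 0 \<delta>1" "Y1 0 = 0" "deriv Y1 0 \<noteq> 0"
    "\<And>z. z \<in> ball 0 \<delta>1 \<Longrightarrow> (Y1 z)^2 * deriv Y1 z = z * ((\<beta> z - \<beta> (-z)) / 2)"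
    "\<And>z. z \<in> ball 0 \<delta>1 \<Longrightarrow> F1 (fst r + z^2) = (Y1 z)^2"
    "\<And>z. z \<in> ball 0 \<delta>1 \<Longrightarrow> F1' (fst r + z^2) * Y1 z = (\<beta> z - \<beta> (-z)) / 2"
    "\<And>z. z \<in> ball 0 \<delta>1 \<Longrightarrow> G1 (fst r + z^2) = - ((\<beta> z + \<beta> (-z)) / 2) / F1' (fst r + z^2)"
    by (rule one_chart[OF assms(1-6) nc1, where Yc=Y1, OF Y1_def]) (rule that)
  obtain \<rho>2 F2 F2' G2 \<delta>2 where c2: "\<rho>2 > 0" "ball (fst r) \<rho>2 \<times> ball (snd r) \<rho>2 \<subseteq> V'"
    "\<And>x. x \<in> ball (fst r) \<rho>2 \<Longrightarrow> (F2 has_field_derivative F2' x) (at x)"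
    "\<And>x. x \<in> ball (fst r) \<rho>2 \<Longrightarrow> F2' x \<noteq> 0"
    "\<And>x y. x \<in> ball (fst r) \<rho>2 \<Longrightarrow> y \<in> ball (snd r) \<rho>2 \<Longrightarrow> \<psi> (x,y) = (F2 x, y / F2' x + G2 x)"
    "\<delta>2 > 0" "\<delta>2^2 \<le> \<rho>2"
    "Y2 holomorphic_on ball 0 \<delta>2" "Y2 0 = 0" "deriv Y2 0 \<noteq> 0"
    "\<And>z. z \<in> ball 0 \<delta>2 \<Longrightarrow> (Y2 z)^2 * deriv Y2 z = z * ((\<beta> z - \<beta> (-z)) / 2)"
    "\<And>z. z \<in> ball 0 \<delta>2 \<Longrightarrow> F2 (fst r + z^2) = (Y2 z)^2"
    "\<And>z. z \<in> ball 0 \<delta>2 \<Longrightarrow> F2' (fst r + z^2) * Y2 z = (\<beta> z - \<beta> (-z)) / 2"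
    "\<And>z. z \<in> ball 0 \<delta>2 \<Longrightarrow> G2 (fst r + z^2) = - ((\<beta> z + \<beta> (-z)) / 2) / F2' (fst r + z^2)"
    by (rule one_chart[OF assms(1-6) nc2, where Yc=Y2, OF Y2_def]) (rule that)
  define \<delta> where "\<delta> = min \<delta>1 \<delta>2"
  have \<delta>pos: "\<delta> > 0" using c1 c2 by (simp add: \<delta>_def)
  have hY1: "Y1 holomorphic_on ball 0 \<delta>" using c1(8) by (rule holomorphic_on_subset) (auto simp: \<delta>_def)
  have hY2: "Y2 holomorphic_on ball 0 \<delta>" using c2(8) by (rule holomorphic_on_subset) (auto simp: \<delta>_def)
  have in1: "z \<in> ball 0 \<delta>1" and in2: "z \<in> ball 0 \<delta>2" if "z \<in> ball 0 \<delta>" for z :: complex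
    using that by (auto simp: \<delta>_def)
  have cube: "(Y1 z)^3 = (Y2 z)^3" if "z \<in> ball 0 \<delta>" for z :: complex
  proof -
    have "\<exists>c. \<forall>z\<in>ball 0 \<delta>. (Y1 z)^3 - (Y2 z)^3 = c"
    proof (rule has_field_derivative_zero_constant)
      show "convex (ball (0::complex) \<delta>)" by simp
      fix z assume z: "z \<in> ball (0::complex) \<delta>"
      have d1: "(Y1 has_field_derivative deriv Y1 z) (at z)" using holomorphic_derivI[OF hY1 open_ball z] .
      have d2: "(Y2 has_field_derivative deriv Y2 z) (at z)" using holomorphic_derivI[OF hY2 open_ball z] .
      have "((\<lambda>z. (Y1 z)^3 - (Y2 z)^3) has_field_derivative
          3 * ((Y1 z)^2 * deriv Y1 z) - 3 * ((Y2 z)^2 * deriv Y2 z)) (at z)"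
        using d1 d2 by (auto intro!: derivative_eq_intros simp: algebra_simps)
      moreover have "3 * ((Y1 z)^2 * deriv Y1 z) - 3 * ((Y2 z)^2 * deriv Y2 z) = 0"
        unfolding c1(11)[OF in1[OF z]] c2(11)[OF in2[OF z]] by simp
      ultimately show "((\<lambda>z. (Y1 z)^3 - (Y2 z)^3) has_field_derivative 0) (at z within ball 0 \<delta>)"
        by (auto intro: has_field_derivative_at_within)
    qed
    then obtain c where "\<forall>z\<in>ball 0 \<delta>. (Y1 z)^3 - (Y2 z)^3 = c" by blast
    moreover have "(0::complex) \<in> ball 0 \<delta>" using \<delta>pos by simp
    ultimately have "Y1 0 ^ 3 - Y2 0 ^ 3 = c" by blast
    then have "c = 0" using c1(9) c2(9) by simp
    with \<open>\<forall>z\<in>ball 0 \<delta>. (Y1 z)^3 - (Y2 z)^3 = c\<close> that show ?thesis by auto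
  qed
  have "eventually (\<lambda>z. Y1 z \<noteq> 0) (at 0)"
  proof (rule deriv_limit_zero)
    show "(Y1 has_field_derivative deriv Y1 0) (at 0)"
      using holomorphic_derivI[OF hY1 open_ball] \<delta>pos by simp
  qed (use c1 in auto)
  then obtain d3 where d3: "d3 > 0" "\<And>z. z \<in> ball 0 d3 \<Longrightarrow> z \<noteq> 0 \<Longrightarrow> Y1 z \<noteq> 0"
    by (elim eventually_at0_ball) blast
  define \<delta>4 where "\<delta>4 = min \<delta> d3"
  have \<delta>4pos: "\<delta>4 > 0" using \<delta>pos d3 by (simp add: \<delta>4_def)
  have in4: "z \<in> ball 0 \<delta>" if "z \<in> ball 0 \<delta>4" for z :: complex using that by (simp add: \<delta>4_def)
  define S where "S = ball (0::complex) \<delta>4 - {0}"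
  define R where "R z = Y2 z / Y1 z" for z
  have Y1nz: "Y1 z \<noteq> 0" if "z \<in> S" for z using d3(2)[of z] that by (auto simp: S_def \<delta>4_def)
  have contR: "continuous_on S R"
  proof -
    have "S \<subseteq> ball 0 \<delta>" using in4 by (auto simp: S_def)
    then have "continuous_on S Y1" "continuous_on S Y2"
      using hY1 hY2 holomorphic_on_imp_continuous_on continuous_on_subset by blast+
    then show ?thesis unfolding R_def[abs_def] using Y1nz by (intro continuous_intros) auto
  qed
  have Rroot: "R z ^ 3 = 1" if "z \<in> S" for z
  proof -
    have "z \<in> ball 0 \<delta>4" using that by (simp add: S_def)
    then have h: "(Y1 z)^3 = (Y2 z)^3" using cube[OF in4] by blast
    have "R z ^ 3 = (Y2 z)^3 / (Y1 z)^3" by (simp add: R_def power_divide)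
    also have "\<dots> = (Y1 z)^3 / (Y1 z)^3" using h by simp
    also have "\<dots> = 1" using Y1nz[OF that] by simp
    finally show ?thesis .
  qed
  have "finite {w::complex. w^3 = 1}" by (intro finite_roots_unity) simp
  then have fin: "finite (R ` S)" by (rule finite_subset[rotated]) (use Rroot in auto)
  have conS: "connected S" unfolding S_def by (rule connected_punctured_ball) simp
  have "R constant_on S" by (rule continuous_finite_range_constant[OF conS contR fin])
  then obtain \<xi> where \<xi>: "\<And>z. z \<in> S \<Longrightarrow> R z = \<xi>" unfolding constant_on_def by blast
  have pt: "complex_of_real (\<delta>4/2) \<in> S" using \<delta>4pos by (simp add: S_def)
  have \<xi>3: "\<xi>^3 = 1" using Rroot[OF pt] \<xi>[OF pt] by simp
  have xinv: "1 / \<xi>^2 = \<xi>" using cube_inv[OF \<xi>3] .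
  have \<xi>nz: "\<xi> \<noteq> 0" using \<xi>3 by auto
  have Y21: "Y2 z = \<xi> * Y1 z" if "z \<in> ball 0 \<delta>4" for z :: complex
  proof (cases "z = 0")
    case True then show ?thesis using c1(9) c2(9) by simp
  next
    case False
    then have "z \<in> S" using that by (simp add: S_def)
    then show ?thesis using \<xi>[of z] Y1nz[of z] by (simp add: R_def field_simps)
  qed
  define A where "A = ball (fst r) (\<delta>4^2)"
  have sq: "fst r + (csqrt (x - fst r))^2 = x" for x by simp
  have csA: "csqrt (x - fst r) \<in> ball 0 \<delta>4" if "x \<in> A" for x
  proof -
    have "norm (x - fst r) < \<delta>4^2" using that by (simp add: A_def dist_norm norm_minus_commute)
    then have "sqrt (norm (x - fst r)) < \<delta>4" using sqrt_lt_sq[OF \<delta>4pos] by simp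
    then show ?thesis by simp
  qed
  have \<delta>4sq: "\<delta>4^2 \<le> \<rho>1" "\<delta>4^2 \<le> \<rho>2"
  proof -
    have "\<delta>4^2 \<le> \<delta>1^2" "\<delta>4^2 \<le> \<delta>2^2" using \<delta>4pos by (auto intro!: power_mono simp: \<delta>4_def \<delta>_def)
    then show "\<delta>4^2 \<le> \<rho>1" "\<delta>4^2 \<le> \<rho>2" using c1(7) c2(7) by auto
  qed
  have A1: "x \<in> ball (fst r) \<rho>1" and A2: "x \<in> ball (fst r) \<rho>2" if "x \<in> A" for x
    using that \<delta>4sq by (auto simp: A_def)
  have FX: "F2 x = \<xi>^2 * F1 x" if "x \<in> A" for x
  proof -
    define z where "z = csqrt (x - fst r)"
    have z: "z \<in> ball 0 \<delta>4" using csA[OF that] by (simp add: z_def)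
    have "F2 (fst r + z^2) = \<xi>^2 * F1 (fst r + z^2)"
      using c1(12)[OF in1[OF in4[OF z]]] c2(12)[OF in2[OF in4[OF z]]] Y21[OF z]
      by (simp add: power_mult_distrib)
    then show ?thesis by (simp add: z_def)
  qed
  have F'X: "F2' x = \<xi>^2 * F1' x" if "x \<in> A" for x
  proof -
    have "((\<lambda>x. \<xi>^2 * F1 x) has_field_derivative \<xi>^2 * F1' x) (at x)"
      using c1(3)[OF A1[OF that]] by (auto intro!: derivative_eq_intros)
    then have "(F2 has_field_derivative \<xi>^2 * F1' x) (at x)"
      by (rule has_field_derivative_transform_within_open[of _ _ _ A]) (use that FX in \<open>auto simp: A_def\<close>)
    then show ?thesis using c2(3)[OF A2[OF that]] DERIV_unique by blast
  qed
  have GX: "G2 x = \<xi> * G1 x" if "x \<in> A" for x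
  proof -
    define z where "z = csqrt (x - fst r)"
    have z: "z \<in> ball 0 \<delta>4" using csA[OF that] by (simp add: z_def)
    have xz: "fst r + z^2 = x" by (simp add: z_def)
    have "G2 x = - ((\<beta> z + \<beta> (-z)) / 2) / F2' x"
      using c2(14)[OF in2[OF in4[OF z]]] xz by simp
    also have "\<dots> = - ((\<beta> z + \<beta> (-z)) / 2) / F1' x * (1 / \<xi>^2)"
      using F'X[OF that] by simp
    also have "\<dots> = \<xi> * G1 x"
      using c1(14)[OF in1[OF in4[OF z]]] xz xinv by simp
    finally show ?thesis .
  qed
  define \<rho> where "\<rho> = min \<rho>1 \<rho>2"
  define W where "W = A \<times> ball (snd r) \<rho>"
  show ?thesis
  proof (intro exI conjI)
    show "\<xi>^3 = 1" by (rule \<xi>3)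
    show "open W" by (simp add: W_def A_def open_Times)
    show "r \<in> W" using \<delta>4pos c1(1) c2(1) by (simp add: W_def A_def \<rho>_def   mem_Times_iff)
    show "W \<subseteq> V \<inter> V'"
    proof
      fix p assume "p \<in> W"
      then obtain x y where p: "p = (x,y)" "x \<in> A" "y \<in> ball (snd r) \<rho>" by (auto simp: W_def)
      have "y \<in> ball (snd r) \<rho>1" "y \<in> ball (snd r) \<rho>2" using p(3) by (auto simp: \<rho>_def)
      then have "(x,y) \<in> V" "(x,y) \<in> V'" using c1(2) c2(2) A1[OF p(2)] A2[OF p(2)] by auto
      then show "p \<in> V \<inter> V'" using p(1) by simp
    qed
    show "\<forall>p\<in>W. \<psi> p = (\<xi>^2 * fst (\<phi> p), \<xi> * snd (\<phi> p))"
    proof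
      fix p assume "p \<in> W"
      then obtain x y where p: "p = (x,y)" "x \<in> A" "y \<in> ball (snd r) \<rho>" by (auto simp: W_def)
      have y1: "y \<in> ball (snd r) \<rho>1" and y2: "y \<in> ball (snd r) \<rho>2" using p(3) by (auto simp: \<rho>_def)
      have "\<psi> (x,y) = (F2 x, y / F2' x + G2 x)" using c2(5)[OF A2[OF p(2)] y2] .
      also have "\<dots> = (\<xi>^2 * F1 x, \<xi> * (y / F1' x + G1 x))"
      proof -
        have "y / F2' x = \<xi> * (y / F1' x)"
        proof -
          have "y / F2' x = y / F1' x * (1 / \<xi>^2)" using F'X[OF p(2)] by simp
          then show ?thesis using xinv by simp
        qed
        then show ?thesis using FX[OF p(2)] GX[OF p(2)] by (simp add: distrib_left)
      qed
      also have "\<dots> = (\<xi>^2 * fst (\<phi> (x,y)), \<xi> * snd (\<phi> (x,y)))"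
        using c1(5)[OF A1[OF p(2)] y1] by simp
      finally show "\<psi> p = (\<xi>^2 * fst (\<phi> p), \<xi> * snd (\<phi> p))" using p(1) by simp
    qed
  qed
qed

lemma csqrt_sq_cases: "csqrt (z^2) = z \<or> csqrt (z^2) = - (z::complex)"
proof -
  show ?thesis using power2_eq_iff[of "csqrt (z^2)" z] by simp
qed

lemma sq_in_ball: "(z::complex) \<in> ball 0 R \<Longrightarrow> z^2 \<in> ball 0 (R^2)"
proof -
  assume "z \<in> ball 0 R"
  then have "norm z < R" by simp
  then have "norm z ^ 2 < R^2" by (intro power_strict_mono) auto
  then show ?thesis by (simp add: norm_power)
qed

lemma csqrt_in_ball: "t \<in> ball 0 (R^2) \<Longrightarrow> R > 0 \<Longrightarrow> csqrt t \<in> ball 0 R"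
proof -
  assume "t \<in> ball 0 (R^2)" "R > 0"
  then have "norm t < R^2" by simp
  then have "sqrt (norm t) < R" using sqrt_lt_sq[OF \<open>R>0\<close>] by simp
  then show ?thesis by simp
qed

lemma even_holo:
  fixes E :: "complex \<Rightarrow> complex"
  assumes hE: "E holomorphic_on ball 0 R" and ev: "\<And>z. z \<in> ball 0 R \<Longrightarrow> E (-z) = E z" and R: "R > 0"
  shows "(\<lambda>t. E (csqrt t)) holomorphic_on ball 0 (R^2)"
    and "\<And>z. z \<in> ball 0 R \<Longrightarrow> E (csqrt (z^2)) = E z"
proof -
  show sqeq: "E (csqrt (z^2)) = E z" if "z \<in> ball 0 R" for z
    using csqrt_sq_cases[of z] ev[OF that] by auto
  have eq2: "E w1 = E w2" if "w1 \<in> ball 0 R" "w2 \<in> ball 0 R" "w1^2 = w2^2" for w1 w2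
    using that ev by (auto simp: power2_eq_iff)
  have dE: "(E has_field_derivative deriv E w) (at w)" if "w \<in> ball 0 R" for w
    using holomorphic_derivI[OF hE open_ball that] .
  show "(\<lambda>t. E (csqrt t)) holomorphic_on ball 0 (R^2)"
  proof (rule no_isolated_singularity'[of "{0}"])
    show "open (ball (0::complex) (R^2))" by simp
    show "finite {0::complex}" by simp
    fix k assume "k \<in> {0::complex}"
    then have k: "k = 0" by simp
    have "((\<lambda>t::complex. norm t) \<longlongrightarrow> norm (0::complex)) (at 0)"
      using tendsto_norm_zero[OF tendsto_ident_at[of "0::complex" UNIV]] by simp
    then have "((\<lambda>t::complex. sqrt (norm t)) \<longlongrightarrow> sqrt (norm (0::complex))) (at 0)"
      by (rule tendsto_real_sqrt)
    then have c0: "(csqrt \<longlongrightarrow> 0) (at 0)" using tendsto_norm_zero_cancel[of csqrt "at 0"] by simp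
    have "isCont E 0" using dE[of 0] R by (simp add: DERIV_isCont)
    then have "((\<lambda>t. E (csqrt t)) \<longlongrightarrow> E 0) (at 0)"
      using isCont_tendsto_compose c0 by blast
    then show "((\<lambda>t. E (csqrt t)) \<longlongrightarrow> E (csqrt k)) (at k within ball 0 (R^2))"
      using k tendsto_within_subset[of _ _ _ UNIV] by simp
  next
    show "(\<lambda>t. E (csqrt t)) holomorphic_on ball 0 (R^2) - {0}"
    proof -
      have "\<exists>f'. ((\<lambda>t. E (csqrt t)) has_field_derivative f') (at t)" if t: "t \<in> ball 0 (R^2) - {0}" for t
      proof (cases "t \<in> \<real>\<^sub>\<le>\<^sub>0")
        case False
        have "csqrt t \<in> ball 0 R" using csqrt_in_ball R t by auto
        then have "((\<lambda>t. E (csqrt t)) has_field_derivative deriv E (csqrt t) * inverse (2 * csqrt t)) (at t)"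
          using DERIV_chain2[OF dE has_field_derivative_csqrt[OF False]] by simp
        then show ?thesis by blast
      next
        case True
        then have Ret: "Re t < 0" using t by (auto simp: complex_nonpos_Reals_iff complex_eq_iff)
        define s where "s w = \<i> * csqrt (- w)" for w
        have nn: "- w \<notin> \<real>\<^sub>\<le>\<^sub>0" if "Re w < 0" for w using that by (auto simp: complex_nonpos_Reals_iff)
        have "((\<lambda>w. \<i> * csqrt (- w)) has_field_derivative \<i> * (- 1 / (2 * csqrt (- t)))) (at t)"
          using nn[OF Ret] by (auto intro!: derivative_eq_intros)
        then obtain Ds where ds: "(s has_field_derivative Ds) (at t)" unfolding s_def[abs_def] by blast
        have s2: "(s w)^2 = w" for w by (simp add: s_def power_mult_distrib)
        have sb: "s w \<in> ball 0 R" if "w \<in> ball 0 (R^2)" for w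
          using csqrt_in_ball[of "-w" R] that R by (simp add: s_def norm_mult)
        have "((\<lambda>w. E (s w)) has_field_derivative deriv E (s t) * Ds) (at t)"
          using DERIV_chain2[OF dE[OF sb] ds] t by simp
        then have "((\<lambda>w. E (csqrt w)) has_field_derivative deriv E (s t) * Ds) (at t)"
        proof (rule has_field_derivative_transform_within_open[where S="ball 0 (R^2) \<inter> {w. Re w < 0}"])
          show "open (ball 0 (R^2) \<inter> {w. Re w < 0})" by (intro open_Int open_halfspace_Re_lt open_ball)
          show "t \<in> ball 0 (R^2) \<inter> {w. Re w < 0}" using t Ret by auto
          fix w assume w: "w \<in> ball 0 (R^2) \<inter> {w. Re w < 0}"
          show "E (s w) = E (csqrt w)"
            by (rule eq2) (use w sb csqrt_in_ball R s2 in auto)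
        qed
        then show ?thesis by blast
      qed
      moreover have "open (ball (0::complex) (R^2) - {0})" by (intro open_Diff) auto
      ultimately show ?thesis using holomorphic_on_open by blast
    qed
  qed
qed

lemma zero_at0:
  fixes H :: "complex \<Rightarrow> 'b::t2_space"
  assumes "isCont H 0" "R > 0" "\<And>z. z \<in> ball 0 R \<Longrightarrow> z \<noteq> 0 \<Longrightarrow> H z = c"
  shows "H 0 = c"
proof -
  have "(H \<longlongrightarrow> H 0) (at 0)" using assms(1) by (simp add: isCont_def)
  moreover have "eventually (\<lambda>z. H z = c) (at (0::complex))"
    unfolding eventually_at using assms(2,3) by (auto simp: dist_norm intro!: exI[of _ R])
  then have "(H \<longlongrightarrow> c) (at 0)" by (rule tendsto_eventually)
  ultimately show ?thesis using tendsto_unique by (metis trivial_limit_at)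
qed

lemma div_z:
  fixes f :: "complex \<Rightarrow> complex"
  assumes "f holomorphic_on ball 0 R" "f 0 = 0" "R > 0"
  obtains h where "h holomorphic_on ball 0 R" "\<And>z. f z = z * h z" "h 0 = deriv f 0"
proof -
  define h where "h z = (if z = 0 then deriv f 0 else (f z - f 0) / (z - 0))" for z
  have "h holomorphic_on ball 0 R"
    unfolding h_def[abs_def] by (rule pole_lemma[OF assms(1)]) (use assms(3) in simp)
  moreover have "f z = z * h z" for z using assms(2) by (simp add: h_def)
  moreover have "h 0 = deriv f 0" by (simp add: h_def)
  ultimately show ?thesis using that by blast
qed

lemma holo2_aff:
  fixes A B :: "complex \<Rightarrow> complex" and f :: "complex \<times> complex \<Rightarrow> complex"
  assumes S: "open S" and hA: "A holomorphic_on S" and hB: "B holomorphic_on S"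
    and V: "open V" "fst ` V \<subseteq> S"
    and f: "\<And>p. f p = A (fst p) + snd p * B (fst p)"
  shows "holo2 f V" and "\<And>p. p \<in> V \<Longrightarrow> pd1 f p = deriv A (fst p) + snd p * deriv B (fst p)"
    and "\<And>p. p \<in> V \<Longrightarrow> pd2 f p = B (fst p)"
    and "continuous_on V f"
proof -
  have fe: "f = (\<lambda>p. A (fst p) + snd p * B (fst p))" using f by (rule ext)
  define D where "D p v = deriv A (fst p) * fst v + (snd p * (deriv B (fst p) * fst v) + snd v * B (fst p))" for p v
  have hD: "(f has_derivative D p) (at p)" if p: "p \<in> V" for p
  proof -
    have fp: "fst p \<in> S" using p V by auto
    have dA: "(A has_field_derivative deriv A (fst p)) (at (fst p))" using holomorphic_derivI[OF hA S fp] .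
    have dB: "(B has_field_derivative deriv B (fst p)) (at (fst p))" using holomorphic_derivI[OF hB S fp] .
    have fst': "((\<lambda>q. fst q) has_derivative (\<lambda>h. fst h)) (at p)"
      using has_derivative_fst[OF has_derivative_ident] .
    have snd': "((\<lambda>q. snd q) has_derivative (\<lambda>h. snd h)) (at p)"
      using has_derivative_snd[OF has_derivative_ident] .
    have fA: "((\<lambda>q. A (fst q)) has_derivative (\<lambda>v. deriv A (fst p) * fst v)) (at p)"
      using diff_chain_at[OF fst' has_field_derivative_imp_has_derivative[OF dA]] by (simp add: o_def)
    have fB: "((\<lambda>q. B (fst q)) has_derivative (\<lambda>v. deriv B (fst p) * fst v)) (at p)"
      using diff_chain_at[OF fst' has_field_derivative_imp_has_derivative[OF dB]] by (simp add: o_def)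
    have "((\<lambda>q. A (fst q) + snd q * B (fst q)) has_derivative
        (\<lambda>v. deriv A (fst p) * fst v + (snd p * (deriv B (fst p) * fst v) + snd v * B (fst p)))) (at p)"
      by (intro has_derivative_add fA has_derivative_mult snd' fB)
    then show ?thesis unfolding fe D_def .
  qed
  have lin: "D p (a * fst v, a * snd v) = a * D p v" for p a v
    by (simp add: D_def algebra_simps)
  have fd: "frechet_derivative f (at p) = D p" if "p \<in> V" for p
    using frechet_derivative_at[OF hD[OF that]] by simp
  show "holo2 f V" unfolding holo2_def using V(1) hD lin by blast
  show "pd1 f p = deriv A (fst p) + snd p * deriv B (fst p)" if "p \<in> V" for p
    by (simp add: pd1_def fd[OF that] D_def)
  show "pd2 f p = B (fst p)" if "p \<in> V" for p
    by (simp add: pd2_def fd[OF that] D_def)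
  show "continuous_on V f"
    using hD has_derivative_continuous continuous_at_imp_continuous_on by blast
qed

lemma ball_neg: "(z::complex) \<in> ball 0 R \<Longrightarrow> -z \<in> ball 0 R"
  by (simp add: dist_0_norm)

lemma deriv_neg:
  assumes "(f has_field_derivative D) (at (- z))"
  shows "((\<lambda>z. f (- z)) has_field_derivative - D) (at (z::complex))"
proof -
  have b: "((\<lambda>w. - w) has_field_derivative -1) (at z)" by (auto intro!: derivative_eq_intros)
  have "((f \<circ> (\<lambda>w. - w)) has_field_derivative D * (-1)) (at z)"
    by (rule DERIV_chain[OF _ b]) (use assms in simp)
  then show ?thesis by (simp add: o_def)
qed

lemma deriv_sq:
  assumes "(f has_field_derivative D) (at (z^2))"
  shows "((\<lambda>z. f (z^2)) has_field_derivative D * (2 * z)) (at (z::complex))"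
proof -
  have b: "((\<lambda>w. w^2) has_field_derivative 2 * z) (at z)" by (auto intro!: derivative_eq_intros)
  have "((f \<circ> (\<lambda>w. w^2)) has_field_derivative D * (2 * z)) (at z)"
    by (rule DERIV_chain[OF _ b]) (use assms in simp)
  then show ?thesis by (simp add: o_def)
qed

lemma holo_neg: "f holomorphic_on ball 0 R \<Longrightarrow> (\<lambda>z. f (- z)) holomorphic_on ball (0::complex) R"
proof -
  assume h: "f holomorphic_on ball 0 R"
  have "(f \<circ> uminus) holomorphic_on ball 0 R"
    by (rule holomorphic_on_compose_gen[OF _ h]) (auto intro: holomorphic_intros simp: ball_neg)
  then show ?thesis by (simp add: o_def)
qed

lemma holo_cont_at: "f holomorphic_on ball 0 R \<Longrightarrow> R > 0 \<Longrightarrow> isCont f (0::complex)"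
  by (meson centre_in_ball continuous_on_eq_continuous_at holomorphic_on_imp_continuous_on open_ball)

lemma holo_deriv_at: "f holomorphic_on ball 0 R \<Longrightarrow> z \<in> ball 0 R \<Longrightarrow> (f has_field_derivative deriv f z) (at (z::complex))"
  using holomorphic_derivI[OF _ open_ball] by blast

lemma partA:
  fixes \<beta> :: "complex \<Rightarrow> complex" and \<epsilon> :: real
  assumes \<epsilon>: "\<epsilon> > 0" and h\<beta>: "\<beta> holomorphic_on ball 0 \<epsilon>" and db: "deriv \<beta> 0 \<noteq> 0"
  obtains \<eta> F G Yz where "\<eta> > 0" "sqrt \<eta> \<le> \<epsilon>"
    "F holomorphic_on ball 0 \<eta>" "G holomorphic_on ball 0 \<eta>"
    "\<And>t. t \<in> ball 0 \<eta> \<Longrightarrow> deriv F t \<noteq> 0" "inj_on F (ball 0 \<eta>)" "F 0 = 0"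
    "\<And>z. z \<in> ball 0 (sqrt \<eta>) \<Longrightarrow> F (z^2) = (Yz z)^2"
    "\<And>z. z \<in> ball 0 (sqrt \<eta>) \<Longrightarrow> deriv F (z^2) * Yz z = (\<beta> z - \<beta> (-z)) / 2"
    "\<And>z. z \<in> ball 0 (sqrt \<eta>) \<Longrightarrow> G (z^2) = - ((\<beta> z + \<beta> (-z)) / 2) / deriv F (z^2)"
    "\<And>z. z \<in> ball 0 (sqrt \<eta>) \<Longrightarrow> Yz (-z) = - Yz z"
proof -
  define b where "b = deriv \<beta> 0"
  define Ob where "Ob z = (\<beta> z - \<beta> (-z)) / 2" for z
  define Ev where "Ev z = (\<beta> z + \<beta> (-z)) / 2" for z
  define B where "B = ball (0::complex) \<epsilon>"
  have hbm: "(\<lambda>z. \<beta> (-z)) holomorphic_on B" using holo_neg[OF h\<beta>] by (simp add: B_def)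
  have hOb: "Ob holomorphic_on B" unfolding Ob_def[abs_def] using h\<beta> hbm
    by (auto intro!: holomorphic_intros simp: B_def)
  have hEv: "Ev holomorphic_on B" unfolding Ev_def[abs_def] using h\<beta> hbm
    by (auto intro!: holomorphic_intros simp: B_def)
  have Obneg: "Ob (-z) = - Ob z" for z by (simp add: Ob_def field_simps)
  have Evneg: "Ev (-z) = Ev z" for z by (simp add: Ev_def field_simps)
  have Ob0: "Ob 0 = 0" by (simp add: Ob_def)
  have 0: "0 \<in> B" using \<epsilon> by (simp add: B_def)
  define g where "g z = 3 * z * Ob z" for z
  have hg: "g holomorphic_on B" unfolding g_def[abs_def] using hOb by (auto intro!: holomorphic_intros)
  obtain Q where Q: "\<And>x. x \<in> B \<Longrightarrow> (Q has_field_derivative g x) (at x within B)"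
  proof (rule holomorphic_convex_primitive[of B "{}" g])
    show "convex B" by (simp add: B_def)
    show "continuous_on B g" using hg holomorphic_on_imp_continuous_on by blast
    show "\<And>x. x \<in> interior B - {} \<Longrightarrow> g field_differentiable at x"
      using hg holomorphic_on_imp_differentiable_at by (auto simp: B_def)
  qed auto
  define Q0 where "Q0 z = Q z - Q 0" for z
  have dQ0: "(Q0 has_field_derivative g x) (at x)" if "x \<in> B" for x
  proof -
    have "(Q has_field_derivative g x) (at x)" using Q[OF that] at_within_open[OF that] by (simp add: B_def)
    then show ?thesis unfolding Q0_def[abs_def] by (auto intro!: derivative_eq_intros)
  qed
  have hQ0: "Q0 holomorphic_on B"
  proof -
    have "open B" by (simp add: B_def)
    then show ?thesis unfolding holomorphic_on_open[OF \<open>open B\<close>] using dQ0 by blast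
  qed
  have Q00: "Q0 0 = 0" by (simp add: Q0_def)
  have Q0odd: "Q0 (-z) = - Q0 z" if "z \<in> B" for z :: complex
  proof -
    have "\<exists>c. \<forall>z\<in>B. Q0 z + Q0 (-z) = c"
    proof (rule has_field_derivative_zero_constant)
      show "convex B" by (simp add: B_def)
      fix z assume z: "z \<in> B"
      have mz: "-z \<in> B" using z ball_neg by (simp add: B_def)
      have a: "(Q0 has_field_derivative g (-z)) (at (-z))" using dQ0[OF mz] .
      have "((\<lambda>z. Q0 (-z)) has_field_derivative g (-z) * (-1)) (at z)"
        using deriv_neg[OF a] by simp
      then have "((\<lambda>z. Q0 z + Q0 (-z)) has_field_derivative g z + g (-z) * (-1)) (at z)"
        using dQ0[OF z] by (auto intro!: derivative_eq_intros)
      moreover have "g z + g (-z) * (-1) = 0" by (simp add: g_def Obneg)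
      ultimately show "((\<lambda>z. Q0 z + Q0 (-z)) has_field_derivative 0) (at z within B)"
        by (auto intro: has_field_derivative_at_within)
    qed
    then obtain c where c: "\<forall>z\<in>B. Q0 z + Q0 (-z) = c" by blast
    then have "c = 0" using 0 Q00 by force
    then show ?thesis using c that by (auto simp: add_eq_0_iff)
  qed
  have \<epsilon>B: "B = ball 0 \<epsilon>" by (simp add: B_def)
  obtain Q1 where Q1: "Q1 holomorphic_on B" "\<And>z. Q0 z = z * Q1 z" "Q1 0 = deriv Q0 0"
    using div_z[OF hQ0[unfolded \<epsilon>B] Q00 \<epsilon>] unfolding \<epsilon>B by blast
  have Q10: "Q1 0 = 0" using Q1(3) DERIV_imp_deriv[OF dQ0[OF 0]] by (simp add: g_def)
  obtain Q2 where Q2: "Q2 holomorphic_on B" "\<And>z. Q1 z = z * Q2 z"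
    using div_z[OF Q1(1)[unfolded \<epsilon>B] Q10 \<epsilon>] unfolding \<epsilon>B by blast
  have Q20: "Q2 0 = 0"
  proof -
    have "isCont (\<lambda>z. Q2 z + Q2 (-z)) 0"
      using holo_cont_at[OF Q2(1)[unfolded \<epsilon>B] \<epsilon>] holo_cont_at[OF holo_neg[OF Q2(1)[unfolded \<epsilon>B]] \<epsilon>]
      by (intro continuous_intros) auto
    moreover have "Q2 z + Q2 (-z) = 0" if "z \<in> ball 0 \<epsilon>" "z \<noteq> 0" for z :: complex
    proof -
      have "z^2 * (Q2 z + Q2 (-z)) = Q0 z + Q0 (-z)"
        using Q1(2)[of z] Q2(2)[of z] Q1(2)[of "-z"] Q2(2)[of "-z"] by (simp add: power2_eq_square algebra_simps)
      also have "\<dots> = 0" using Q0odd[of z] that by (simp add: B_def)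
      finally show ?thesis using that by simp
    qed
    ultimately have "(\<lambda>z. Q2 z + Q2 (-z)) 0 = 0" by (rule zero_at0[OF _ \<epsilon>])
    then show ?thesis by simp
  qed
  obtain q where q: "q holomorphic_on B" "\<And>z. Q2 z = z * q z"
    using div_z[OF Q2(1)[unfolded \<epsilon>B] Q20 \<epsilon>] unfolding \<epsilon>B by blast
  have Q0q: "Q0 z = z^3 * q z" for z using Q1(2)[of z] Q2(2)[of z] q(2)[of z] by (simp add: power3_eq_cube)
  have qeven: "q (-z) = q z" if "z \<in> B" for z :: complex
  proof (cases "z = 0")
    case False
    have "z^3 * q (-z) = z^3 * q z" using Q0odd[OF that] Q0q[of z] Q0q[of "-z"] by simp
    then show ?thesis using False by simp
  qed simp
  obtain o1 where o1: "o1 holomorphic_on B" "\<And>z. Ob z = z * o1 z" "o1 0 = deriv Ob 0"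
    using div_z[OF hOb[unfolded \<epsilon>B] Ob0 \<epsilon>] unfolding \<epsilon>B by blast
  have o10: "o1 0 = b"
  proof -
    have d1: "(\<beta> has_field_derivative b) (at 0)" using holo_deriv_at[OF h\<beta>] \<epsilon> by (simp add: b_def)
    have d2: "((\<lambda>z. \<beta> (-z)) has_field_derivative b * (-1)) (at 0)"
      using deriv_neg[of \<beta> b 0] d1 by simp
    have "(Ob has_field_derivative (b - b * (-1)) / 2) (at 0)"
      unfolding Ob_def[abs_def] using d1 d2 by (auto intro!: derivative_eq_intros)
    then show ?thesis using o1(3) DERIV_imp_deriv by fastforce
  qed
  have q0: "q 0 = b"
  proof -
    have dq: "(q has_field_derivative deriv q z) (at z)" if "z \<in> B" for z :: complex
      using holo_deriv_at[OF q(1)[unfolded \<epsilon>B]] that by (simp add: B_def)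
    have key: "3 * z^2 * q z + z^3 * deriv q z = 3 * z^2 * o1 z" if "z \<in> B" for z :: complex
    proof -
      have "((\<lambda>z. z^3 * q z) has_field_derivative 3 * z^2 * q z + z^3 * deriv q z) (at z)"
        using dq[OF that] by (auto intro!: derivative_eq_intros simp: algebra_simps)
      then have "(Q0 has_field_derivative 3 * z^2 * q z + z^3 * deriv q z) (at z)"
      proof -
        have "Q0 = (\<lambda>z. z^3 * q z)" using Q0q by (rule ext)
        then show ?thesis using \<open>((\<lambda>z. z^3 * q z) has_field_derivative _) _\<close> by simp
      qed
      moreover have "g z = 3 * z^2 * o1 z" by (simp add: g_def o1(2) power2_eq_square)
      ultimately show ?thesis using dQ0[OF that] DERIV_unique by metis
    qed
    have "isCont (\<lambda>z. 3 * q z + z * deriv q z - 3 * o1 z) 0"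
    proof -
      have "deriv q holomorphic_on ball 0 \<epsilon>" using holomorphic_deriv[OF q(1)[unfolded \<epsilon>B] open_ball] .
      then show ?thesis
        using holo_cont_at[OF q(1)[unfolded \<epsilon>B] \<epsilon>] holo_cont_at[OF o1(1)[unfolded \<epsilon>B] \<epsilon>]
          holo_cont_at[OF _ \<epsilon>, of "deriv q"]
        by (intro continuous_intros) auto
    qed
    moreover have "3 * q z + z * deriv q z - 3 * o1 z = 0" if "z \<in> ball 0 \<epsilon>" "z \<noteq> 0" for z :: complex
    proof -
      have "z^2 * (3 * q z + z * deriv q z - 3 * o1 z) = 0"
        using key[of z] that by (simp add: B_def algebra_simps power2_eq_square power3_eq_cube)
      then show ?thesis using that by simp
    qed
    ultimately have "(\<lambda>z. 3 * q z + z * deriv q z - 3 * o1 z) 0 = 0" by (rule zero_at0[OF _ \<epsilon>])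
    then show ?thesis using o10 by simp
  qed
  have bnz: "b \<noteq> 0" using db by (simp add: b_def)
  have "isCont q 0" using holo_cont_at[OF q(1)[unfolded \<epsilon>B] \<epsilon>] .
  then have "eventually (\<lambda>z. dist (q z) (q 0) < norm b) (at 0)"
    using bnz unfolding isCont_def tendsto_iff by simp
  then obtain d where d: "d > 0" "\<And>z. z \<in> ball 0 d \<Longrightarrow> z \<noteq> 0 \<Longrightarrow> dist (q z) (q 0) < norm b"
    by (elim eventually_at0_ball) blast
  define \<delta>1 where "\<delta>1 = min \<epsilon> d"
  have \<delta>1: "\<delta>1 > 0" using d \<epsilon> by (simp add: \<delta>1_def)
  define B1 where "B1 = ball (0::complex) \<delta>1"
  have B1B: "B1 \<subseteq> B" by (auto simp: B1_def B_def \<delta>1_def)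
  have B1neg: "-z \<in> B1" if "z \<in> B1" for z :: complex using that by (simp add: B1_def ball_neg)
  have qpos: "q z / b \<notin> \<real>\<^sub>\<le>\<^sub>0" if "z \<in> B1" for z :: complex
  proof -
    have "norm (q z - b) < norm b"
      using d(2)[of z] that q0 bnz by (cases "z = 0") (auto simp: B1_def \<delta>1_def dist_norm)
    moreover have "q z / b - 1 = (q z - b) / b" using bnz by (simp add: field_simps)
    ultimately have "norm (q z / b - 1) < 1" using bnz
      by (simp add: norm_divide)
    then have "\<bar>Re (q z / b - 1)\<bar> < 1" using abs_Re_le_cmod le_less_trans by blast
    then have "Re (q z / b) > 0" by simp
    then show ?thesis by (auto simp: complex_nonpos_Reals_iff)
  qed
  define c where "c = exp (Ln b / 3)"
  define u where "u z = c * exp (Ln (q z / b) / 3)" for z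
  have c3: "c^3 = b"
  proof -
    have "c^3 = exp (of_nat 3 * (Ln b / 3))" unfolding c_def by (rule exp_of_nat_mult[symmetric])
    also have "\<dots> = b" using bnz by simp
    finally show ?thesis .
  qed
  have hq1: "q holomorphic_on B1" using q(1) B1B holomorphic_on_subset by blast
  have hu: "u holomorphic_on B1"
    unfolding u_def[abs_def] using hq1 qpos by (intro holomorphic_intros) auto
  have u3: "(u z)^3 = q z" if "z \<in> B1" for z :: complex
  proof -
    have "(exp (Ln (q z / b) / 3))^3 = exp (of_nat 3 * (Ln (q z / b) / 3))" by (rule exp_of_nat_mult[symmetric])
    also have "\<dots> = q z / b"
    proof -
      have "q z / b \<noteq> 0" using qpos[OF that] by auto
      then show ?thesis by simp
    qed
    finally have "(exp (Ln (q z / b) / 3))^3 = q z / b" .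
    then show ?thesis using c3 bnz by (simp add: u_def power_mult_distrib)
  qed
  have ueven: "u (-z) = u z" if "z \<in> B1" for z :: complex using qeven[of z] that B1B by (auto simp: u_def)
  have unz: "u z \<noteq> 0" for z using c3 bnz by (auto simp: u_def)
  define Yz where "Yz z = z * u z" for z
  have hYz: "Yz holomorphic_on B1" unfolding Yz_def[abs_def] using hu by (intro holomorphic_intros)
  have Yzodd: "Yz (-z) = - Yz z" if "z \<in> B1" for z :: complex using ueven[OF that] by (simp add: Yz_def)
  have du: "(u has_field_derivative deriv u z) (at z)" if "z \<in> B1" for z :: complex
    using holo_deriv_at[OF hu[unfolded B1_def]] that by (simp add: B1_def)
  have dYz: "(Yz has_field_derivative u z + z * deriv u z) (at z)" if "z \<in> B1" for z :: complex
    unfolding Yz_def[abs_def] using du[OF that] by (auto intro!: derivative_eq_intros)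
  have Yz3: "(Yz z)^3 = Q0 z" if "z \<in> B1" for z :: complex
    using u3[OF that] Q0q[of z] by (simp add: Yz_def power_mult_distrib)
  have KEY2: "(Yz z)^2 * (u z + z * deriv u z) = z * Ob z" if "z \<in> B1" for z :: complex
  proof -
    have "((\<lambda>z. (Yz z)^3) has_field_derivative 3 * (Yz z)^2 * (u z + z * deriv u z)) (at z)"
      using dYz[OF that] by (auto intro!: derivative_eq_intros)
    then have "(Q0 has_field_derivative 3 * (Yz z)^2 * (u z + z * deriv u z)) (at z)"
      by (rule has_field_derivative_transform_within_open[of _ _ _ B1]) (use that Yz3 in \<open>auto simp: B1_def\<close>)
    then have "3 * (Yz z)^2 * (u z + z * deriv u z) = g z"
      using dQ0[of z] that B1B DERIV_unique by blast
    then show ?thesis by (simp add: g_def)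
  qed
  define EF where "EF z = (Yz z)^2" for z
  have hEF: "EF holomorphic_on ball 0 \<delta>1" unfolding EF_def[abs_def] using hYz by (auto intro!: holomorphic_intros simp: B1_def)
  have EFeven: "EF (-z) = EF z" if "z \<in> ball 0 \<delta>1" for z :: complex using Yzodd[of z] that by (simp add: EF_def B1_def)
  define F where "F t = EF (csqrt t)" for t
  have hF: "F holomorphic_on ball 0 (\<delta>1^2)" unfolding F_def[abs_def] by (rule even_holo(1)[OF hEF EFeven \<delta>1])
  have FEF: "F (z^2) = (Yz z)^2" if "z \<in> B1" for z :: complex
    using even_holo(2)[OF hEF EFeven \<delta>1, of z] that by (simp add: F_def EF_def B1_def)
  have F0: "F 0 = 0" by (simp add: F_def EF_def Yz_def)
  have KEY1: "deriv F (z^2) * (2 * z) = 2 * Yz z * (u z + z * deriv u z)" if "z \<in> B1" for z :: complex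
  proof -
    have zz: "z^2 \<in> ball 0 (\<delta>1^2)" using sq_in_ball that by (simp add: B1_def)
    have "((\<lambda>z. F (z^2)) has_field_derivative deriv F (z^2) * (2 * z)) (at z)"
      using deriv_sq[OF holo_deriv_at[OF hF zz]] .
    moreover have "((\<lambda>z. F (z^2)) has_field_derivative 2 * Yz z * (u z + z * deriv u z)) (at z)"
    proof -
      have "((\<lambda>z. (Yz z)^2) has_field_derivative 2 * Yz z * (u z + z * deriv u z)) (at z)"
        using dYz[OF that] by (auto intro!: derivative_eq_intros)
      then show ?thesis
        by (rule has_field_derivative_transform_within_open[of _ _ _ B1]) (use that FEF in \<open>auto simp: B1_def\<close>)
    qed
    ultimately show ?thesis using DERIV_unique by blast
  qed
  have OY: "deriv F (z^2) * Yz z = Ob z" if "z \<in> B1" for z :: complex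
  proof (cases "z = 0")
    case True then show ?thesis by (simp add: Yz_def Ob0)
  next
    case False
    have "deriv F (z^2) * Yz z * (2 * z) = Yz z * (2 * Yz z * (u z + z * deriv u z))"
      using KEY1[OF that] by (simp add: algebra_simps)
    also have "\<dots> = 2 * ((Yz z)^2 * (u z + z * deriv u z))" by (simp add: power2_eq_square algebra_simps)
    also have "\<dots> = Ob z * (2 * z)" using KEY2[OF that] by simp
    finally show ?thesis using False by simp
  qed
  have 0: "(0::complex) \<in> ball 0 (\<delta>1^2)" using \<delta>1 by simp
  have hdF: "deriv F holomorphic_on ball 0 (\<delta>1^2)" by (rule holomorphic_deriv[OF hF open_ball])
  have cdF: "isCont (deriv F) 0" using holo_cont_at[OF hdF] \<delta>1 by simp
  have dF0: "deriv F 0 = u 0 * u 0"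
  proof -
    have c1: "isCont (\<lambda>z. z^2) (0::complex)" by (intro continuous_intros)
    have "isCont (\<lambda>z. deriv F (z^2)) 0" using isCont_o2[OF c1, of "deriv F"] cdF by simp
    moreover have "isCont u 0" using holo_cont_at[OF hu[unfolded B1_def] \<delta>1] .
    moreover have "isCont (deriv u) 0"
      using holo_cont_at[OF holomorphic_deriv[OF hu[unfolded B1_def] open_ball] \<delta>1] .
    ultimately have "isCont (\<lambda>z. deriv F (z^2) - u z * (u z + z * deriv u z)) 0"
      by (intro continuous_intros)
    moreover have "deriv F (z^2) - u z * (u z + z * deriv u z) = 0" if "z \<in> ball 0 \<delta>1" "z \<noteq> 0" for z :: complex
    proof -
      have "deriv F (z^2) * (2 * z) = (u z * (u z + z * deriv u z)) * (2 * z)"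
        using KEY1[of z] that by (simp add: B1_def Yz_def algebra_simps)
      then show ?thesis using that by simp
    qed
    ultimately have "(\<lambda>z. deriv F (z^2) - u z * (u z + z * deriv u z)) 0 = 0" by (rule zero_at0[OF _ \<delta>1])
    then show ?thesis by simp
  qed
  have dF0nz: "deriv F 0 \<noteq> 0" using dF0 unz by simp
  obtain r1 where r1: "r1 > 0" "ball (0::complex) r1 \<subseteq> ball 0 (\<delta>1^2)" "inj_on F (ball 0 r1)"
    by (rule has_complex_derivative_locally_injective[OF hF 0 open_ball dF0nz]) (rule that)
  have "eventually (\<lambda>t. deriv F t \<noteq> 0) (at 0)"
    using cdF dF0nz unfolding isCont_def by (rule tendsto_imp_eventually_ne)
  then obtain d2 where d2: "d2 > 0" "\<And>t. t \<in> ball 0 d2 \<Longrightarrow> t \<noteq> 0 \<Longrightarrow> deriv F t \<noteq> 0"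
    by (elim eventually_at0_ball) blast
  define \<eta> where "\<eta> = min (min r1 d2) (\<delta>1^2)"
  have \<eta>: "\<eta> > 0" using r1 d2 \<delta>1 by (simp add: \<eta>_def)
  define \<delta>2 where "\<delta>2 = sqrt \<eta>"
  have \<delta>2: "\<delta>2 > 0" using \<eta> by (simp add: \<delta>2_def)
  have \<delta>2sq: "\<delta>2^2 = \<eta>" using \<eta> by (simp add: \<delta>2_def)
  have \<delta>21: "\<delta>2 \<le> \<delta>1"
  proof -
    have "sqrt \<eta> \<le> sqrt (\<delta>1^2)" by (rule real_sqrt_le_mono) (simp add: \<eta>_def)
    then show ?thesis using \<delta>1 by (simp add: \<delta>2_def)
  qed
  have in1: "z \<in> B1" if "z \<in> ball 0 \<delta>2" for z :: complex using that \<delta>21 by (simp add: B1_def)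
  have sqin: "z^2 \<in> ball 0 \<eta>" if "z \<in> ball 0 \<delta>2" for z :: complex using sq_in_ball[OF that] \<delta>2sq by simp
  have \<eta>1: "ball 0 \<eta> \<subseteq> ball (0::complex) (\<delta>1^2)" by (auto simp: \<eta>_def)
  have dFnz: "deriv F t \<noteq> 0" if "t \<in> ball 0 \<eta>" for t
    using d2(2)[of t] dF0nz that by (cases "t = 0") (auto simp: \<eta>_def)
  define EG where "EG z = - Ev z / deriv F (z^2)" for z
  have hEG: "EG holomorphic_on ball 0 \<delta>2"
  proof -
    have "(deriv F \<circ> (\<lambda>z. z^2)) holomorphic_on ball 0 \<delta>2"
      by (rule holomorphic_on_compose_gen[OF _ hdF]) (use sqin \<eta>1 in \<open>auto intro!: holomorphic_intros\<close>)
    moreover have "Ev holomorphic_on ball 0 \<delta>2"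
      using hEv by (rule holomorphic_on_subset) (use in1 B1B in auto)
    ultimately show ?thesis unfolding EG_def[abs_def] using dFnz sqin
      by (auto intro!: holomorphic_intros simp: o_def)
  qed
  have EGeven: "EG (-z) = EG z" if "z \<in> ball 0 \<delta>2" for z by (simp add: EG_def Evneg)
  define G where "G t = EG (csqrt t)" for t
  have hG: "G holomorphic_on ball 0 \<eta>"
    unfolding G_def[abs_def] using even_holo(1)[OF hEG EGeven \<delta>2] \<delta>2sq by simp
  have GEG: "G (z^2) = EG z" if "z \<in> ball 0 \<delta>2" for z :: complex
    using even_holo(2)[OF hEG EGeven \<delta>2 that] by (simp add: G_def)
  show ?thesis
  proof (rule that[of \<eta> F G Yz])
    show "0 < \<eta>" by (rule \<eta>)
    show "sqrt \<eta> \<le> \<epsilon>" using \<delta>21 by (simp add: \<delta>2_def \<delta>1_def)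
    show "F holomorphic_on ball 0 \<eta>" using hF \<eta>1 holomorphic_on_subset by blast
    show "G holomorphic_on ball 0 \<eta>" by (rule hG)
    show "\<And>t. t \<in> ball 0 \<eta> \<Longrightarrow> deriv F t \<noteq> 0" by (rule dFnz)
    show "inj_on F (ball 0 \<eta>)" by (rule inj_on_subset[OF r1(3)]) (auto simp: \<eta>_def)
    show "F 0 = 0" by (rule F0)
    fix z :: complex assume z: "z \<in> ball 0 (sqrt \<eta>)"
    then have z2: "z \<in> ball 0 \<delta>2" by (simp add: \<delta>2_def)
    show "F (z^2) = (Yz z)^2" using FEF[OF in1[OF z2]] .
    show "deriv F (z^2) * Yz z = (\<beta> z - \<beta> (-z)) / 2" using OY[OF in1[OF z2]] by (simp add: Ob_def)
    show "G (z^2) = - ((\<beta> z + \<beta> (-z)) / 2) / deriv F (z^2)" using GEG[OF z2] by (simp add: EG_def Ev_def)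
    show "Yz (-z) = - Yz z" using Yzodd[OF in1[OF z2]] .
  qed
qed

lemma existence:
  fixes U0 \<Sigma> :: "(complex \<times> complex) set" and r :: "complex \<times> complex"
    and \<beta> :: "complex \<Rightarrow> complex" and \<epsilon> :: real
  assumes U0: "open U0" and rU0: "r \<in> U0" and \<epsilon>: "\<epsilon> > 0"
    and h\<beta>: "\<beta> holomorphic_on ball 0 \<epsilon>" and b0: "\<beta> 0 = snd r" and db: "deriv \<beta> 0 \<noteq> 0"
    and sub: "(\<lambda>z. (fst r + z^2, \<beta> z)) ` ball 0 \<epsilon> \<subseteq> U0"
    and Sig: "\<Sigma> \<inter> U0 = (\<lambda>z. (fst r + z^2, \<beta> z)) ` ball 0 \<epsilon>"
  shows "\<exists>V \<phi>. normal_chart U0 \<Sigma> r V \<phi>"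
proof -
  obtain \<eta> F G Yz where \<eta>: "\<eta> > 0" "sqrt \<eta> \<le> \<epsilon>"
    and hF: "F holomorphic_on ball 0 \<eta>" and hG: "G holomorphic_on ball 0 \<eta>"
    and dFnz: "\<And>t. t \<in> ball 0 \<eta> \<Longrightarrow> deriv F t \<noteq> 0" and injF: "inj_on F (ball 0 \<eta>)" and F0: "F 0 = 0"
    and FY: "\<And>z. z \<in> ball 0 (sqrt \<eta>) \<Longrightarrow> F (z^2) = (Yz z)^2"
    and OY: "\<And>z. z \<in> ball 0 (sqrt \<eta>) \<Longrightarrow> deriv F (z^2) * Yz z = (\<beta> z - \<beta> (-z)) / 2"
    and GE: "\<And>z. z \<in> ball 0 (sqrt \<eta>) \<Longrightarrow> G (z^2) = - ((\<beta> z + \<beta> (-z)) / 2) / deriv F (z^2)"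
    and Yodd: "\<And>z. z \<in> ball 0 (sqrt \<eta>) \<Longrightarrow> Yz (-z) = - Yz z"
    by (rule partA[OF \<epsilon> h\<beta> db]) (rule that)
  define x0 where "x0 = fst r"
  define y0 where "y0 = snd r"
  obtain \<rho>0 where \<rho>0: "\<rho>0 > 0" "ball r \<rho>0 \<subseteq> U0" using U0 rU0 openE by blast
  define \<rho> where "\<rho> = min \<eta> (\<rho>0/2)"
  have \<rho>: "\<rho> > 0" using \<eta> \<rho>0 by (simp add: \<rho>_def)
  define V where "V = ball x0 \<rho> \<times> ball y0 \<rho>"
  define \<phi> where "\<phi> p = (F (fst p - x0), snd p / deriv F (fst p - x0) + G (fst p - x0))" for p
  define S where "S = ball x0 \<eta>"
  have shift: "x - x0 \<in> ball 0 \<eta>" if "x \<in> S" for x using that by (simp add: S_def dist_norm norm_minus_commute)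
  have VS: "fst ` V \<subseteq> S" by (auto simp: V_def S_def \<rho>_def)
  have oV: "open V" by (simp add: V_def open_Times)
  have VU: "V \<subseteq> U0"
  proof -
    have "V \<subseteq> ball x0 (\<rho>0/2) \<times> ball y0 (\<rho>0/2)" by (auto simp: V_def \<rho>_def)
    also have "\<dots> \<subseteq> ball r \<rho>0" using prod_ball_sub[OF \<rho>0(1), of r] by (simp add: x0_def y0_def)
    finally show ?thesis using \<rho>0(2) by blast
  qed
  have rV: "r \<in> V" using \<rho> by (simp add: V_def x0_def y0_def mem_Times_iff)
  have hsh: "(\<lambda>x. x - x0) holomorphic_on S" by (intro holomorphic_intros)
  have shS: "(\<lambda>x. x - x0) ` S \<subseteq> ball 0 \<eta>" using shift by blast
  have hA1: "(\<lambda>x. F (x - x0)) holomorphic_on S"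
    using holomorphic_on_compose_gen[OF hsh hF shS] by (simp add: o_def)
  have hA2: "(\<lambda>x. G (x - x0)) holomorphic_on S"
    using holomorphic_on_compose_gen[OF hsh hG shS] by (simp add: o_def)
  have hdF: "deriv F holomorphic_on ball 0 \<eta>" by (rule holomorphic_deriv[OF hF open_ball])
  have hB2: "(\<lambda>x. 1 / deriv F (x - x0)) holomorphic_on S"
  proof -
    have "(\<lambda>x. deriv F (x - x0)) holomorphic_on S"
      using holomorphic_on_compose_gen[OF hsh hdF shS] by (simp add: o_def)
    then show ?thesis using dFnz shift by (auto intro!: holomorphic_intros)
  qed
  have dA1: "deriv (\<lambda>x. F (x - x0)) x = deriv F (x - x0)" if "x \<in> S" for x
  proof -
    have "(F has_field_derivative deriv F (x - x0)) (at (x - x0))" using holo_deriv_at[OF hF shift[OF that]] .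
    then have "((\<lambda>x. F (x - x0)) has_field_derivative deriv F (x - x0) * 1) (at x)"
    proof -
      have d: "((\<lambda>x. x - x0) has_field_derivative 1) (at x)" by (auto intro!: derivative_eq_intros)
      show ?thesis using DERIV_chain[of F "deriv F (x - x0)" "\<lambda>x. x - x0" x 1 UNIV] d \<open>(F has_field_derivative _) _\<close>
        by (simp add: o_def)
    qed
    then show ?thesis using DERIV_imp_deriv by fastforce
  qed
  have eqX: "(fst \<circ> \<phi>) p = F (fst p - x0) + snd p * 0" for p by (simp add: \<phi>_def)
  have eqY: "(snd \<circ> \<phi>) p = G (fst p - x0) + snd p * (1 / deriv F (fst p - x0))" for p by (simp add: \<phi>_def)
  have hc0: "(\<lambda>x. 0::complex) holomorphic_on S" by simp
  note AX = holo2_aff[OF _ hA1 hc0 oV VS eqX, unfolded S_def, OF open_ball]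
  note AY = holo2_aff[OF _ hA2 hB2 oV VS eqY, unfolded S_def, OF open_ball]
  have fstV: "fst p \<in> S" if "p \<in> V" for p using VS that by auto
  have FO: "FO_chart V \<phi>"
    unfolding FO_chart_def
  proof (intro conjI ballI)
    show "open V" by (rule oV)
    show "holo2 (fst \<circ> \<phi>) V" by (rule AX(1))
    show "holo2 (snd \<circ> \<phi>) V" by (rule AY(1))
    show inj: "inj_on \<phi> V"
    proof (rule inj_onI)
      fix p q assume p: "p \<in> V" and q: "q \<in> V" and e: "\<phi> p = \<phi> q"
      have "F (fst p - x0) = F (fst q - x0)" using e by (simp add: \<phi>_def)
      then have "fst p - x0 = fst q - x0" using injF shift[OF fstV[OF p]] shift[OF fstV[OF q]] inj_onD by metis
      then have f: "fst p = fst q" by simp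
      then have "snd p / deriv F (fst p - x0) = snd q / deriv F (fst p - x0)" using e by (simp add: \<phi>_def)
      then have "snd p = snd q" using dFnz[OF shift[OF fstV[OF p]]] by simp
      then show "p = q" using f by (simp add: prod_eq_iff)
    qed
    show "open (\<phi> ` V)"
    proof (rule invariance_of_domain[OF _ oV inj])
      have "continuous_on V (\<lambda>p. ((fst \<circ> \<phi>) p, (snd \<circ> \<phi>) p))"
        using AX(4) AY(4) by (intro continuous_on_Pair)
      then show "continuous_on V \<phi>" by simp
    qed
    fix p assume p: "p \<in> V"
    show "pd2 (fst \<circ> \<phi>) p = 0" using AX(3)[OF p] by (simp add: o_def)
    have "pd1 (fst \<circ> \<phi>) p = deriv F (fst p - x0)" using AX(2)[OF p] dA1[OF fstV[OF p]] by (simp add: o_def)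
    then show "pd1 (fst \<circ> \<phi>) p * pd2 (snd \<circ> \<phi>) p - pd2 (fst \<circ> \<phi>) p * pd1 (snd \<circ> \<phi>) p = 1"
      using AX(3)[OF p] AY(3)[OF p] dFnz[OF shift[OF fstV[OF p]]] by (simp add: o_def)
  qed
  have z0in: "(0::complex) \<in> ball 0 (sqrt \<eta>)" using \<eta> by simp
  have \<phi>r: "\<phi> r = (0, 0)"
  proof -
    have "G 0 = - ((\<beta> 0 + \<beta> 0) / 2) / deriv F 0" using GE[OF z0in] by simp
    then have "G 0 = - y0 / deriv F 0" using b0 by (simp add: y0_def)
    then show ?thesis by (simp add: \<phi>_def x0_def y0_def F0)
  qed
  have ineps: "z \<in> ball 0 \<epsilon>" if "z \<in> ball 0 (sqrt \<eta>)" for z :: complex using that \<eta>(2) by simp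
  have key: "\<beta> z / deriv F (z^2) + G (z^2) = Yz z" if z: "z \<in> ball 0 (sqrt \<eta>)" for z
  proof -
    have "z^2 \<in> ball 0 \<eta>" using sq_in_ball[OF z] \<eta>(1) by simp
    then have d: "deriv F (z^2) \<noteq> 0" by (rule dFnz)
    have "\<beta> z / deriv F (z^2) + G (z^2) = (\<beta> z - (\<beta> z + \<beta> (-z)) / 2) / deriv F (z^2)"
      using GE[OF z] by (simp add: diff_divide_distrib)
    also have "\<dots> = ((\<beta> z - \<beta> (-z)) / 2) / deriv F (z^2)" by (simp add: field_simps)
    also have "\<dots> = Yz z" using OY[OF z] d by (simp add: field_simps)
    finally show ?thesis .
  qed
  have SigV: "p \<in> \<Sigma> \<longleftrightarrow> fst (\<phi> p) = (snd (\<phi> p))^2" if p: "p \<in> V" for p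
  proof -
    obtain x y where xy: "p = (x,y)" "x \<in> ball x0 \<rho>" "y \<in> ball y0 \<rho>" using p by (auto simp: V_def)
    have pU: "p \<in> U0" using VU p by blast
    have "p \<in> \<Sigma> \<longleftrightarrow> p \<in> (\<lambda>z. (fst r + z^2, \<beta> z)) ` ball 0 \<epsilon>" using Sig pU by blast
    also have "\<dots> \<longleftrightarrow> fst (\<phi> p) = (snd (\<phi> p))^2"
    proof
      assume "p \<in> (\<lambda>z. (fst r + z^2, \<beta> z)) ` ball 0 \<epsilon>"
      then obtain z where z: "z \<in> ball 0 \<epsilon>" "x = x0 + z^2" "y = \<beta> z" using xy(1) by (auto simp: x0_def)
      have "norm (z^2) < \<rho>" using xy(2) z(2) by (simp add: dist_norm)
      then have "(norm z)^2 < \<eta>" by (simp add: norm_power \<rho>_def)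
      then have "norm z < sqrt \<eta>" by (rule real_less_rsqrt)
      then have zb: "z \<in> ball 0 (sqrt \<eta>)" by simp
      show "fst (\<phi> p) = (snd (\<phi> p))^2"
        using FY[OF zb] key[OF zb] by (simp add: \<phi>_def xy(1) z(2,3))
    next
      assume h: "fst (\<phi> p) = (snd (\<phi> p))^2"
      define t where "t = x - x0"
      define z0 where "z0 = csqrt t"
      have tb: "t \<in> ball 0 \<eta>" using xy(2) by (simp add: t_def \<rho>_def dist_norm norm_minus_commute)
      have z0b: "z0 \<in> ball 0 (sqrt \<eta>)" using csqrt_in_ball[of t "sqrt \<eta>"] tb \<eta>(1) by (simp add: z0_def)
      have z0t: "z0^2 = t" by (simp add: z0_def)
      have "(y / deriv F t + G t)^2 = (Yz z0)^2"
        using h FY[OF z0b] z0t by (simp add: \<phi>_def xy(1) t_def)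
      then have "y / deriv F t + G t = Yz z0 \<or> y / deriv F t + G t = Yz (-z0)"
        using Yodd[OF z0b] by (simp add: power2_eq_iff)
      then obtain z where zz: "z \<in> ball 0 (sqrt \<eta>)" "z^2 = t" "y / deriv F t + G t = Yz z"
        using z0b z0t ball_neg[OF z0b] by (metis power2_minus)
      have "y / deriv F (z^2) + G (z^2) = \<beta> z / deriv F (z^2) + G (z^2)"
        using zz key[OF zz(1)] by simp
      then have "y / deriv F (z^2) = \<beta> z / deriv F (z^2)" by simp
      moreover have "deriv F (z^2) \<noteq> 0" using dFnz tb zz(2) by simp
      ultimately have "y = \<beta> z" by simp
      moreover have "x = fst r + z^2" using zz(2) by (simp add: t_def x0_def)
      ultimately show "p \<in> (\<lambda>z. (fst r + z^2, \<beta> z)) ` ball 0 \<epsilon>"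
        using xy(1) ineps[OF zz(1)] by auto
    qed
    finally show ?thesis .
  qed
  have "normal_chart U0 \<Sigma> r V \<phi>"
    unfolding normal_chart_def using VU rV FO \<phi>r SigV by blast
  then show ?thesis by blast
qed

theorem lemma2p6:
  fixes U0 \<Sigma> :: "(complex \<times> complex) set" and r :: "complex \<times> complex"
    and \<beta> :: "complex \<Rightarrow> complex" and \<epsilon> :: real
  assumes "open U0" and "r \<in> U0" and "\<epsilon> > 0"
    and "\<beta> holomorphic_on ball 0 \<epsilon>" and "\<beta> 0 = snd r" and "deriv \<beta> 0 \<noteq> 0"
    and "(\<lambda>z. (fst r + z^2, \<beta> z)) ` ball 0 \<epsilon> \<subseteq> U0"
    and "\<Sigma> \<inter> U0 = (\<lambda>z. (fst r + z^2, \<beta> z)) ` ball 0 \<epsilon>"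
  shows "(\<exists>V \<phi>. normal_chart U0 \<Sigma> r V \<phi>) \<and>
    (\<forall>V \<phi> V' \<psi>. normal_chart U0 \<Sigma> r V \<phi> \<longrightarrow> normal_chart U0 \<Sigma> r V' \<psi> \<longrightarrow>
       (\<exists>\<xi>::complex. \<xi>^3 = 1 \<and>
          (\<exists>W. open W \<and> r \<in> W \<and> W \<subseteq> V \<inter> V' \<and>
             (\<forall>p\<in>W. \<psi> p = (\<xi>^2 * fst (\<phi> p), \<xi> * snd (\<phi> p))))))"
proof (intro conjI allI impI)
  show "\<exists>V \<phi>. normal_chart U0 \<Sigma> r V \<phi>" by (rule existence[OF assms])
next
  fix V \<phi> V' \<psi>
  assume "normal_chart U0 \<Sigma> r V \<phi>" "normal_chart U0 \<Sigma> r V' \<psi>"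
  then show "\<exists>\<xi>::complex. \<xi>^3 = 1 \<and>
          (\<exists>W. open W \<and> r \<in> W \<and> W \<subseteq> V \<inter> V' \<and>
             (\<forall>p\<in>W. \<psi> p = (\<xi>^2 * fst (\<phi> p), \<xi> * snd (\<phi> p))))"
    by (rule uniq[OF assms(3-8)])
qed

end
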